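(* There exists a constant $c_G>0$, depending only on $\Omega$, such that for all $\vec u\in H^1_0(\Omega)^3$, $$ \int_\Omega G[\vec u]\,dx\ge c_G\int_\Omega|\vec u|^2dx . $$
   Context: $\Omega\subset\mathbb{R}^2$ is a bounded domain with $C^{1,1}$ boundary. For $\vec v=(v_1,v_2,v_3):\Omega\to\mathbb{R}^3$, with $\partial_1,\partial_2$ the partial derivatives in $x_1,x_2$: $\operatorname{curl}\vec v=(\partial_2v_3,-\partial_1v_3,\partial_1v_2-\partial_2v_1)$, $\|\nabla\vec v\|^2=\sum_{i=1}^2\sum_{k=1}^3(\partial_iv_k)^2$, and $G[\vec v]=\|\nabla\vec v\|^2+2\vec v\cdot\operatorname{curl}\vec v+2|\vec v|^2$. *)

theory Defs
  imports "HOL-Analysis.Analysis"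
begin

type_synonym pt = "real ^ 2"

definition pd :: "2 \<Rightarrow> (pt \<Rightarrow> real) \<Rightarrow> pt \<Rightarrow> real" where
  "pd i f x = frechet_derivative f (at x) (axis i 1)"

coinductive cinf :: "(pt \<Rightarrow> real) \<Rightarrow> bool" where
  "\<lbrakk> \<forall>x. f differentiable (at x); \<forall>i. cinf (pd i f) \<rbrakk> \<Longrightarrow> cinf f"

definition test_fun :: "pt set \<Rightarrow> (pt \<Rightarrow> real) \<Rightarrow> bool" where
  "test_fun \<Omega> \<phi> \<longleftrightarrow> cinf \<phi> \<and> compact (closure {x. \<phi> x \<noteq> 0})
      \<and> closure {x. \<phi> x \<noteq> 0} \<subseteq> \<Omega>"

definition L2 :: "pt set \<Rightarrow> (pt \<Rightarrow> real) \<Rightarrow> bool" where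
  "L2 \<Omega> f \<longleftrightarrow> f \<in> borel_measurable (lebesgue_on \<Omega>)
      \<and> integrable (lebesgue_on \<Omega>) (\<lambda>x. (f x)\<^sup>2)"

definition weak_pd :: "pt set \<Rightarrow> 2 \<Rightarrow> (pt \<Rightarrow> real) \<Rightarrow> (pt \<Rightarrow> real) \<Rightarrow> bool" where
  "weak_pd \<Omega> i f g \<longleftrightarrow>
     (\<forall>K. compact K \<and> K \<subseteq> \<Omega> \<longrightarrow> integrable (lebesgue_on K) f \<and> integrable (lebesgue_on K) g)
     \<and> (\<forall>\<phi>. test_fun \<Omega> \<phi> \<longrightarrow>
          integral\<^sup>L (lebesgue_on \<Omega>) (\<lambda>x. f x * pd i \<phi> x)
          = - integral\<^sup>L (lebesgue_on \<Omega>) (\<lambda>x. g x * \<phi> x))"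

text \<open>H^1_0(Omega): closure of C_c^infinity(Omega) in the H^1 norm.\<close>
definition H10 :: "pt set \<Rightarrow> (pt \<Rightarrow> real) \<Rightarrow> bool" where
  "H10 \<Omega> f \<longleftrightarrow> L2 \<Omega> f \<and>
     (\<exists>g :: 2 \<Rightarrow> pt \<Rightarrow> real. (\<forall>i. weak_pd \<Omega> i f (g i) \<and> L2 \<Omega> (g i)) \<and>
        (\<exists>\<phi> :: nat \<Rightarrow> pt \<Rightarrow> real. (\<forall>n. test_fun \<Omega> (\<phi> n)) \<and>
           (\<lambda>n. integral\<^sup>L (lebesgue_on \<Omega>) (\<lambda>x. (\<phi> n x - f x)\<^sup>2)
              + (\<Sum>i\<in>UNIV. integral\<^sup>L (lebesgue_on \<Omega>) (\<lambda>x. (pd i (\<phi> n) x - g i x)\<^sup>2)))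
           \<longlonglongrightarrow> 0))"

text \<open>Bounded domain with C^{1,1} boundary: open, connected, bounded, and near every
  boundary point, after a rigid change of coordinates, Omega is the region below the graph
  of a C^1 function with Lipschitz derivative.\<close>
definition C11_domain :: "pt set \<Rightarrow> bool" where
  "C11_domain \<Omega> \<longleftrightarrow> open \<Omega> \<and> connected \<Omega> \<and> \<Omega> \<noteq> {} \<and> bounded \<Omega> \<and>
     (\<forall>p\<in>frontier \<Omega>. \<exists>r>0. \<exists>Q :: real^2^2. \<exists>h h' :: real \<Rightarrow> real. \<exists>L.
        orthogonal_matrix Q \<and>
        (\<forall>t. (h has_real_derivative h' t) (at t)) \<and>
        (\<forall>s t. \<bar>h' s - h' t\<bar> \<le> L * \<bar>s - t\<bar>) \<and>
        \<Omega> \<inter> ball p r = {x \<in> ball p r. (Q *v (x - p)) $ 2 < h ((Q *v (x - p)) $ 1)})"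

text \<open>Pointwise density G[v] given values v = (v1,v2,v3) and gradient D with
  D $ i $ k = partial_i v_k.\<close>
definition Gdens :: "real^3 \<Rightarrow> real^3^2 \<Rightarrow> real" where
  "Gdens v D =
     (\<Sum>i\<in>UNIV. \<Sum>k\<in>UNIV. (D $ i $ k)\<^sup>2)
     + 2 * (v $ 1 * (D $ 2 $ 3) + v $ 2 * (- (D $ 1 $ 3)) + v $ 3 * (D $ 1 $ 2 - D $ 2 $ 1))
     + 2 * (norm v)\<^sup>2"

end

theory Submission
  imports Defs "HOL-Computational_Algebra.Polynomial"
begin


coinductive sm1 :: "(real \<Rightarrow> real) \<Rightarrow> bool" where
  sm1I: "(\<And>x. (f has_real_derivative f' x) (at x)) \<Longrightarrow> sm1 f' \<Longrightarrow> sm1 f"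

definition psip :: "real poly \<Rightarrow> real \<Rightarrow> real" where
  "psip p t = (if t > 0 then poly p (1/t) * exp (-1/t) else 0)"

lemma poly_exp_lim: fixes r :: "real poly" shows "((\<lambda>s. poly r s * exp (-s)) \<longlongrightarrow> 0) at_top"
proof -
  have "((\<lambda>s. \<Sum>i\<le>degree r. coeff r i * (s ^ i / exp s)) \<longlongrightarrow> (\<Sum>i\<le>degree r. coeff r i * 0)) at_top"
    by (intro tendsto_intros tendsto_power_div_exp_0)
  moreover have "(\<lambda>s. \<Sum>i\<le>degree r. coeff r i * (s ^ i / exp s)) = (\<lambda>s. poly r s * exp (-s))"
    by (simp add: poly_altdef sum_distrib_right exp_minus divide_inverse mult.assoc)
  ultimately show ?thesis by simp
qed

lemma poly_exp_lim0: fixes r :: "real poly" shows "((\<lambda>y. poly r (1/y) * exp (-1/y)) \<longlongrightarrow> 0) (at_right 0)"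
proof -
  have "((\<lambda>y. poly r (inverse y) * exp (- inverse y)) \<longlongrightarrow> 0) (at_right 0)"
    by (rule filterlim_compose[OF poly_exp_lim filterlim_inverse_at_top_right])
  then show ?thesis by (simp add: inverse_eq_divide)
qed

lemma psip_deriv_pos:
  assumes "t > 0"
  shows "(psip p has_real_derivative psip (monom 1 2 * (p - pderiv p)) t) (at t)"
proof -
  have d: "((\<lambda>t. poly p (1/t) * exp (-1/t)) has_real_derivative
     (poly (pderiv p) (1/t) * (- 1 / t^2) * exp (-1/t) + poly p (1/t) * (exp (-1/t) * (1/t^2)))) (at t)"
    using assms
    by (auto intro!: derivative_eq_intros simp: power2_eq_square field_simps)
  have e: "poly (pderiv p) (1/t) * (- 1 / t^2) * exp (-1/t) + poly p (1/t) * (exp (-1/t) * (1/t^2))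
      = psip (monom 1 2 * (p - pderiv p)) t"
    using assms by (simp add: psip_def poly_monom algebra_simps power2_eq_square)
  show ?thesis
    apply (rule has_field_derivative_transform_within_open[of _ _ _ "{0<..}"])
    using d e assms by (auto simp: psip_def)
qed

lemma psip_deriv_neg:
  assumes "t < 0"
  shows "(psip p has_real_derivative psip q t) (at t)"
  apply (rule has_field_derivative_transform_within_open[of "\<lambda>_. 0" _ _ "{..<0}"])
  using assms by (auto simp: psip_def)

lemma psip_deriv_0:
  shows "(psip p has_real_derivative psip q 0) (at 0)"
proof -
  have "((\<lambda>h. (psip p (0 + h) - psip p 0) / h) \<longlongrightarrow> 0) (at 0)"
  proof (rule filterlim_split_at)
    show "((\<lambda>h. (psip p (0 + h) - psip p 0) / h) \<longlongrightarrow> 0) (at_left 0)"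
      by (rule tendsto_eventually) (auto simp: psip_def eventually_at_left_field intro!: exI[of _ "-1"])
    have "((\<lambda>y. poly (pCons 0 p) (1/y) * exp (-1/y)) \<longlongrightarrow> 0) (at_right 0)"
      by (rule poly_exp_lim0)
    then show "((\<lambda>h. (psip p (0 + h) - psip p 0) / h) \<longlongrightarrow> 0) (at_right 0)"
      apply (rule Lim_transform_eventually)
      by (auto simp: psip_def eventually_at_right_field intro!: exI[of _ 1])
  qed
  then show ?thesis by (simp add: DERIV_def psip_def)
qed

lemma psip_deriv: "(psip p has_real_derivative psip (monom 1 2 * (p - pderiv p)) t) (at t)"
  using psip_deriv_pos[of t p] psip_deriv_neg[of t p] psip_deriv_0[of p]
  by (cases "t > 0"; cases "t < 0") auto

lemma sm1_psip: "sm1 (psip p)"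
proof -
  have "\<exists>p. f = psip p \<Longrightarrow> sm1 f" for f
  proof (coinduction arbitrary: f rule: sm1.coinduct)
    case sm1
    then obtain p where "f = psip p" by auto
    then show ?case using psip_deriv by blast
  qed
  then show ?thesis by blast
qed

lemma sm1_affine: assumes "sm1 f" shows "sm1 (\<lambda>t. k * f (c * t + d))"
proof -
  have "\<exists>f k. sm1 f \<and> h = (\<lambda>t. k * f (c * t + d)) \<Longrightarrow> sm1 h" for h
  proof (coinduction arbitrary: h k rule: sm1.coinduct)
    case sm1
    then obtain f k where f: "sm1 f" and h: "h = (\<lambda>t. k * f (c * t + d))" by auto
    from f obtain f' where d: "\<And>x. (f has_real_derivative f' x) (at x)" and "sm1 f'"
      by (cases rule: sm1.cases) auto
    have "(h has_real_derivative (k * c) * f' (c * x + d)) (at x)" for x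
      unfolding h
      by (rule derivative_eq_intros DERIV_chain2[OF d] | simp)+
    then show ?case using \<open>sm1 f'\<close>
      by (intro exI[of _ h] exI[of _ "\<lambda>x. (k * c) * f' (c * x + d)"]) auto
  qed
  then show ?thesis using assms by blast
qed

lemma sm1_mult: assumes "sm1 f" "sm1 g" shows "sm1 (\<lambda>t. f t * g t)"
proof -
  have co: "\<exists>xs. (\<forall>(f,g)\<in>set xs. sm1 f \<and> sm1 g) \<and> h = (\<lambda>t. \<Sum>(f,g)\<leftarrow>xs. f t * g t) \<Longrightarrow> sm1 h" for h
  proof (coinduction arbitrary: h rule: sm1.coinduct)
    case sm1
    then obtain xs where xs: "\<forall>(f,g)\<in>set xs. sm1 f \<and> sm1 g" and h: "h = (\<lambda>t. \<Sum>(f,g)\<leftarrow>xs. f t * g t)"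
      by auto
    have "\<exists>ys. (\<forall>(f,g)\<in>set ys. sm1 f \<and> sm1 g) \<and>
      (\<forall>x. ((\<lambda>t. \<Sum>(f,g)\<leftarrow>xs. f t * g t) has_real_derivative (\<Sum>(f,g)\<leftarrow>ys. f x * g x)) (at x))"
      using xs
    proof (induction xs)
      case Nil
      then show ?case by (auto intro!: exI[of _ "[]"])
    next
      case (Cons a xs)
      obtain f g where a: "a = (f,g)" by (cases a)
      with Cons.prems have f: "sm1 f" and g: "sm1 g" by auto
      from f obtain f' where df: "\<And>x. (f has_real_derivative f' x) (at x)" and "sm1 f'"
        by (cases rule: sm1.cases) auto
      from g obtain g' where dg: "\<And>x. (g has_real_derivative g' x) (at x)" and "sm1 g'"
        by (cases rule: sm1.cases) auto
      from Cons obtain ys where ys: "\<forall>(f,g)\<in>set ys. sm1 f \<and> sm1 g"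
        "\<forall>x. ((\<lambda>t. \<Sum>(f,g)\<leftarrow>xs. f t * g t) has_real_derivative (\<Sum>(f,g)\<leftarrow>ys. f x * g x)) (at x)"
        by auto
      show ?case
      proof (intro exI[of _ "(f',g) # (f,g') # ys"] conjI allI)
        show "\<forall>(f, g)\<in>set ((f', g) # (f, g') # ys). sm1 f \<and> sm1 g"
          using ys f g \<open>sm1 f'\<close> \<open>sm1 g'\<close> by auto
        fix x
        have m: "((\<lambda>t. f t * g t) has_real_derivative (f x * g' x + f' x * g x)) (at x)"
          by (rule DERIV_mult'[OF df dg])
        have "((\<lambda>t. f t * g t + (\<Sum>(f,g)\<leftarrow>xs. f t * g t)) has_real_derivative
            (f x * g' x + f' x * g x) + (\<Sum>(f,g)\<leftarrow>ys. f x * g x)) (at x)"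
          by (intro DERIV_add m ys(2)[rule_format])
        then show "((\<lambda>t. \<Sum>(f, g)\<leftarrow>a # xs. f t * g t) has_real_derivative
            (\<Sum>(f, g)\<leftarrow>(f', g) # (f, g') # ys. f x * g x)) (at x)"
          by (simp add: a algebra_simps)
      qed
    qed
    then obtain ys where ys: "\<forall>(f,g)\<in>set ys. sm1 f \<and> sm1 g"
      "\<forall>x. ((\<lambda>t. \<Sum>(f,g)\<leftarrow>xs. f t * g t) has_real_derivative (\<Sum>(f,g)\<leftarrow>ys. f x * g x)) (at x)"
      by blast
    show ?case
      by (intro exI[of _ h] exI[of _ "\<lambda>x. \<Sum>(f,g)\<leftarrow>ys. f x * g x"] conjI disjI1) (use ys h in auto)
  qed
  show ?thesis
    by (rule co[of "\<lambda>t. f t * g t", OF exI[of _ "[(f,g)]"]]) (use assms in auto)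
qed


definition psi1 :: "real \<Rightarrow> real" where "psi1 = psip 1"

lemma psi1_eq: "psi1 t = (if t > 0 then exp (-1/t) else 0)"
  by (simp add: psi1_def psip_def)

definition bmp :: "real \<Rightarrow> real \<Rightarrow> real \<Rightarrow> real \<Rightarrow> real" where
  "bmp n a b t = psi1 (n * (t - a)) * psi1 (n * (b - t))"

lemma sm1_bmp: "sm1 (bmp n a b)"
proof -
  have 1: "sm1 (\<lambda>t. 1 * psi1 (n * t + (- n * a)))"
    by (rule sm1_affine) (simp add: psi1_def sm1_psip)
  have 2: "sm1 (\<lambda>t. 1 * psi1 ((-n) * t + n * b))"
    by (rule sm1_affine) (simp add: psi1_def sm1_psip)
  have "sm1 (\<lambda>t. (1 * psi1 (n * t + (- n * a))) * (1 * psi1 ((-n) * t + n * b)))"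
    by (rule sm1_mult[OF 1 2])
  moreover have "(\<lambda>t. (1 * psi1 (n * t + (- n * a))) * (1 * psi1 ((-n) * t + n * b))) = bmp n a b"
    by (auto simp: bmp_def algebra_simps)
  ultimately show ?thesis by simp
qed

lemma bmp_nonzero: "n > 0 \<Longrightarrow> bmp n a b t \<noteq> 0 \<longleftrightarrow> a < t \<and> t < b"
  by (auto simp: bmp_def psi1_eq zero_less_mult_iff)

lemma bmp_nonneg: "0 \<le> bmp n a b t"
  by (auto simp: bmp_def psi1_eq)

lemma bmp_le1: "bmp n a b t \<le> 1"
proof -
  have "0 \<le> psi1 s" "psi1 s \<le> 1" for s by (auto simp: psi1_eq)
  then show ?thesis unfolding bmp_def by (meson mult_le_one)
qed

lemma psi1_lim: assumes "s > 0" shows "(\<lambda>n. psi1 (real (Suc n) * s)) \<longlonglongrightarrow> 1"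
proof -
  have "(\<lambda>n. exp (- (1 / s) * inverse (real (Suc n)))) \<longlonglongrightarrow> exp (- (1/s) * 0)"
    by (intro tendsto_intros LIMSEQ_inverse_real_of_nat)
  moreover have "psi1 (real (Suc n) * s) = exp (- (1 / s) * inverse (real (Suc n)))" for n
    using assms by (simp add: psi1_eq divide_inverse mult.commute)
  ultimately show ?thesis by simp
qed

lemma bmp_lim: "(\<lambda>n. bmp (real (Suc n)) a b t) \<longlonglongrightarrow> indicator {a<..<b} t"
proof (cases "a < t \<and> t < b")
  case True
  then have "(\<lambda>n. psi1 (real (Suc n) * (t - a)) * psi1 (real (Suc n) * (b - t))) \<longlonglongrightarrow> 1 * 1"
    by (intro tendsto_mult psi1_lim) auto
  then show ?thesis using True by (simp add: bmp_def)
next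
  case False
  then have "bmp (real (Suc n)) a b t = 0" for n
    using bmp_nonzero[of "real (Suc n)" a b t] by auto
  then show ?thesis using False by simp
qed



definition prod2 :: "(real \<Rightarrow> real) \<Rightarrow> (real \<Rightarrow> real) \<Rightarrow> pt \<Rightarrow> real" where
  "prod2 F G x = F (x $ 1) * G (x $ 2)"

lemma has_derivative_nth_comp:
  assumes "(F has_real_derivative D) (at (x $ i))"
  shows "((\<lambda>y::pt. F (y $ i)) has_derivative (\<lambda>h. D * h $ i)) (at x)"
proof -
  have l: "((\<lambda>y::pt. y $ i) has_derivative (\<lambda>h. h $ i)) (at x)"
    by (rule bounded_linear_imp_has_derivative) (rule bounded_linear_vec_nth)
  show ?thesis
    using has_derivative_compose[OF l assms[unfolded has_field_derivative_def]] by simp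
qed

lemma prod2_has_derivative:
  assumes "\<And>t. (F has_real_derivative F' t) (at t)" "\<And>t. (G has_real_derivative G' t) (at t)"
  shows "(prod2 F G has_derivative
     (\<lambda>h. F' (x$1) * h$1 * G (x$2) + F (x$1) * (G' (x$2) * h$2))) (at x)"
proof -
  have "((\<lambda>y. F (y $ 1) * G (y $ 2)) has_derivative
      (\<lambda>h. F (x $ 1) * (G' (x $ 2) * h $ 2) + F' (x $ 1) * h $ 1 * G (x $ 2))) (at x)"
    by (rule has_derivative_mult[OF has_derivative_nth_comp[OF assms(1)[of "x$1"]] has_derivative_nth_comp[OF assms(2)[of "x$2"]]])
  then show ?thesis unfolding prod2_def by (simp add: add.commute)
qed

lemma pd_prod2:
  assumes "\<And>t. (F has_real_derivative F' t) (at t)" "\<And>t. (G has_real_derivative G' t) (at t)"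
  shows "pd 1 (prod2 F G) = prod2 F' G" "pd 2 (prod2 F G) = prod2 F G'"
proof (rule_tac [!] ext)
  fix x :: pt
  have e: "pd i (prod2 F G) x = F'(x$1) * (axis i 1::pt)$1 * G(x$2) + F(x$1)*(G'(x$2)*(axis i 1::pt)$2)" for i
    unfolding pd_def frechet_derivative_at[OF prod2_has_derivative[OF assms, of x], symmetric] by simp
  show "pd 1 (prod2 F G) x = prod2 F' G x" using e[of 1] by (simp add: axis_def prod2_def)
  show "pd 2 (prod2 F G) x = prod2 F G' x" using e[of 2] by (simp add: axis_def prod2_def)
qed



lemma cinf_prod2: assumes "sm1 F" "sm1 G" shows "cinf (prod2 F G)"
proof -
  have "\<exists>F G. sm1 F \<and> sm1 G \<and> f = prod2 F G \<Longrightarrow> cinf f" for f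
  proof (coinduction arbitrary: f rule: cinf.coinduct)
    case cinf
    then obtain F G where F: "sm1 F" and G: "sm1 G" and f: "f = prod2 F G" by auto
    from F obtain F' where dF: "\<And>x. (F has_real_derivative F' x) (at x)" and "sm1 F'"
      by (cases rule: sm1.cases) auto
    from G obtain G' where dG: "\<And>x. (G has_real_derivative G' x) (at x)" and "sm1 G'"
      by (cases rule: sm1.cases) auto
    have D1: "\<forall>x. f differentiable (at x)"
      unfolding f differentiable_def using prod2_has_derivative[OF dF dG] by blast
    have D2: "\<forall>i. \<exists>F G. pd i f = prod2 F G \<and> sm1 F \<and> sm1 G"
    proof
      fix i :: 2
      from exhaust_2[of i] show "\<exists>F G. pd i f = prod2 F G \<and> sm1 F \<and> sm1 G"
      proof
        assume "i = 1" then show ?thesis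
          using pd_prod2(1)[OF dF dG] \<open>sm1 F'\<close> G f by blast
      next
        assume "i = 2" then show ?thesis
          using pd_prod2(2)[OF dF dG] \<open>sm1 G'\<close> F f by blast
      qed
    qed
    show ?case
      apply (rule exI[of _ f])
      apply (intro conjI refl D1 allI disjI1)
      using D2 by meson
  qed
  then show ?thesis using assms by blast
qed



definition boxfun :: "real \<Rightarrow> pt \<Rightarrow> pt \<Rightarrow> pt \<Rightarrow> real" where
  "boxfun n c d = prod2 (bmp n (c$1) (d$1)) (bmp n (c$2) (d$2))"

lemma boxfun_nonzero: assumes "n > 0" shows "{x. boxfun n c d x \<noteq> 0} = box c d"
proof (rule set_eqI)
  fix x :: pt
  have "boxfun n c d x \<noteq> 0 \<longleftrightarrow> bmp n (c$1) (d$1) (x$1) \<noteq> 0 \<and> bmp n (c$2) (d$2) (x$2) \<noteq> 0"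
    by (simp add: boxfun_def prod2_def)
  also have "\<dots> \<longleftrightarrow> x \<in> box c d"
    unfolding bmp_nonzero[OF assms] mem_box_cart forall_2 by blast
  finally show "x \<in> {x. boxfun n c d x \<noteq> 0} \<longleftrightarrow> x \<in> box c d" by simp
qed

lemma test_fun_boxfun:
  assumes "n > 0" "\<And>i. c$i < d$i" "cbox c d \<subseteq> \<Omega>"
  shows "test_fun \<Omega> (boxfun n c d)"
proof -
  have "box c d \<noteq> {}" using assms(2) by (auto simp: interval_eq_empty_cart not_le)
  then have "closure {x. boxfun n c d x \<noteq> 0} = cbox c d"
    using boxfun_nonzero[OF assms(1)] closure_box by metis
  then show ?thesis
    using assms by (auto simp: test_fun_def boxfun_def intro!: cinf_prod2 sm1_bmp)
qed


lemma sets_lborel_box: "sets (lborel :: pt measure) = sigma_sets UNIV (range (\<lambda>(a, b). box a b))"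
  by (subst sets_lborel, subst borel_eq_box) (simp add: sets_measure_of)

lemma open_lebesgue: "open (S::'a::euclidean_space set) \<Longrightarrow> S \<in> sets lebesgue"
  by (intro sets_completionI_sets) (simp add: borel_open)

lemma FL0:
  fixes k :: "pt \<Rightarrow> real"
  assumes int: "integrable lebesgue k"
    and box0: "\<And>c d. integral\<^sup>L lebesgue (\<lambda>x. indicator (box c d) x * k x) = 0"
  shows "AE x in lebesgue. k x = 0"
proof -
  have km: "k \<in> borel_measurable lebesgue" using int by auto
  obtain g where gm[measurable]: "g \<in> borel_measurable lborel" and kg: "AE x in lborel. k x = g x"
    using completion_ex_borel_measurable_real[OF km] by auto
  have kgL: "AE x in lebesgue. k x = g x" using AE_completion[OF kg] .
  have gL: "g \<in> borel_measurable lebesgue" using gm by (rule measurable_completion)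
  have intgL: "integrable lebesgue g" using int integrable_cong_AE[OF km gL kgL] by simp
  have intg: "integrable lborel g" using intgL integrable_completion[OF gm] by simp
  have bx: "integral\<^sup>L lborel (\<lambda>x. indicator (box c d) x * g x) = 0" for c d
  proof -
    have "integral\<^sup>L lborel (\<lambda>x. indicator (box c d) x * g x)
        = integral\<^sup>L lebesgue (\<lambda>x. indicator (box c d) x * g x)"
      by (rule integral_completion[symmetric]) measurable
    also have "\<dots> = integral\<^sup>L lebesgue (\<lambda>x. indicator (box c d) x * k x)"
      by (rule integral_cong_AE) (use kgL km gL open_lebesgue[OF open_box, of c d] in \<open>auto intro!: borel_measurable_times borel_measurable_indicator\<close>)
    finally show ?thesis using box0 by simp
  qed
  define gp where "gp x = max 0 (g x)" for x
  define gn where "gn x = max 0 (- g x)" for x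
  have [measurable]: "gp \<in> borel_measurable lborel" "gn \<in> borel_measurable lborel"
    unfolding gp_def gn_def by measurable
  have igp: "integrable lborel gp" unfolding gp_def using intg by auto
  have ign: "integrable lborel gn" unfolding gn_def using intg by auto
  have nn: "(\<integral>\<^sup>+ x. ennreal (h x) * indicator A x \<partial>lborel) = ennreal (integral\<^sup>L lborel (\<lambda>x. indicator A x * h x))"
    if "integrable lborel h" "\<And>x. h x \<ge> 0" "A \<in> sets lborel" for h A
  proof -
    have "(\<integral>\<^sup>+ x. ennreal (h x) * indicator A x \<partial>lborel) = (\<integral>\<^sup>+ x. ennreal (indicator A x * h x) \<partial>lborel)"
      by (intro nn_integral_cong) (auto simp: indicator_def)
    also have "\<dots> = ennreal (integral\<^sup>L lborel (\<lambda>x. indicator A x * h x))"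
      by (rule nn_integral_eq_integral) (use that in \<open>auto intro: integrable_mult_indicator[of A lborel h, simplified]\<close>)
    finally show ?thesis .
  qed
  let ?M = "density lborel (\<lambda>x. ennreal (gp x))" and ?N = "density lborel (\<lambda>x. ennreal (gn x))"
  have "?M = ?N"
  proof (rule measure_eqI_generator_eq[where E = "range (\<lambda>(a, b). box a b)" and \<Omega> = UNIV
        and A = "\<lambda>i. box (- (real i *\<^sub>R One)) (real i *\<^sub>R One)"])
    show "Int_stable (range (\<lambda>(a, b). box a b :: pt set))"
    proof (rule Int_stableI)
      fix X Y assume "X \<in> range (\<lambda>(a, b). box a b :: pt set)" "Y \<in> range (\<lambda>(a, b). box a b :: pt set)"
      then obtain a b c d where "X = box a b" "Y = box c d" by auto
      then show "X \<inter> Y \<in> range (\<lambda>(a, b). box a b :: pt set)"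
      proof -
        have "X \<inter> Y = (\<lambda>(a, b). box a b) ((\<Sum>i\<in>Basis. max (a \<bullet> i) (c \<bullet> i) *\<^sub>R i), (\<Sum>i\<in>Basis. min (b \<bullet> i) (d \<bullet> i) *\<^sub>R i))"
          using \<open>X = box a b\<close> \<open>Y = box c d\<close> box_Int_box by simp
        then show ?thesis by (rule image_eqI) simp
      qed
    qed
    show "range (\<lambda>(a, b). box a b :: pt set) \<subseteq> Pow UNIV" by simp
    show "sets ?M = sigma_sets UNIV (range (\<lambda>(a, b). box a b))"
      by (subst sets_density) (rule sets_lborel_box)
    show "sets ?N = sigma_sets UNIV (range (\<lambda>(a, b). box a b))"
      by (subst sets_density) (rule sets_lborel_box)
    show "range (\<lambda>i. box (- (real i *\<^sub>R One)) (real i *\<^sub>R One :: pt)) \<subseteq> range (\<lambda>(a, b). box a b)"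
      by auto
    show "(\<Union>i. box (- (real i *\<^sub>R One)) (real i *\<^sub>R One :: pt)) = UNIV"
    proof (rule set_eqI, simp)
      fix x :: pt
      obtain i :: nat where i: "norm x < real i" using reals_Archimedean2 by blast
      have "\<forall>b\<in>Basis. - real i < x \<bullet> b \<and> x \<bullet> b < real i"
        using i Basis_le_norm[of _ x] by (auto simp: abs_le_iff) (smt (verit) Basis_le_norm)+
      then show "\<exists>i. x \<in> box (- (real i *\<^sub>R One)) (real i *\<^sub>R One)"
        by (auto simp: mem_box inner_minus_left intro!: exI[of _ i])
    qed
    fix X assume "X \<in> range (\<lambda>(a, b). box a b :: pt set)"
    then obtain c d where X: "X = box c d" by auto
    have "emeasure ?M X = ennreal (integral\<^sup>L lborel (\<lambda>x. indicator X x * gp x))"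
      by (subst emeasure_density) (auto simp: X gp_def intro!: nn[OF igp, unfolded gp_def])
    also have "integral\<^sup>L lborel (\<lambda>x. indicator X x * gp x) = integral\<^sup>L lborel (\<lambda>x. indicator X x * gn x)"
    proof -
      have "integral\<^sup>L lborel (\<lambda>x. indicator X x * gp x) - integral\<^sup>L lborel (\<lambda>x. indicator X x * gn x)
          = integral\<^sup>L lborel (\<lambda>x. indicator X x * gp x - indicator X x * gn x)"
        by (rule Bochner_Integration.integral_diff[symmetric])
           (use integrable_mult_indicator[of X lborel gp] integrable_mult_indicator[of X lborel gn] igp ign in \<open>auto simp: X\<close>)
      also have "(\<lambda>x. indicator X x * gp x - indicator X x * gn x) = (\<lambda>x. indicator (box c d) x * g x)"
        by (auto simp: X gp_def gn_def indicator_def max_def intro!: ext)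
      finally show ?thesis using bx[of c d] by simp
    qed
    also have "ennreal (integral\<^sup>L lborel (\<lambda>x. indicator X x * gn x)) = emeasure ?N X"
      by (subst emeasure_density) (auto simp: X gn_def intro!: nn[OF ign, unfolded gn_def, symmetric])
    finally show "emeasure ?M X = emeasure ?N X" .
  next
    fix i :: nat
    have "emeasure ?M (box (- (real i *\<^sub>R One)) (real i *\<^sub>R One)) \<le> emeasure ?M UNIV"
      by (rule emeasure_mono) auto
    also have "emeasure ?M UNIV = (\<integral>\<^sup>+ x. ennreal (gp x) \<partial>lborel)"
      by (subst emeasure_density) auto
    also have "\<dots> < \<infinity>"
    proof -
      have "\<bar>gp x\<bar> = gp x" for x by (simp add: gp_def)
      then show ?thesis using igp by (auto simp: integrable_iff_bounded)
    qed
    finally show "emeasure ?M (box (- (real i *\<^sub>R One)) (real i *\<^sub>R One)) \<noteq> \<infinity>" by simp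
  qed
  then have "AE x in lborel. ennreal (gp x) = ennreal (gn x)"
    by (intro sigma_finite_measure.density_unique[OF lborel.sigma_finite_measure_axioms]) auto
  then have "AE x in lborel. g x = 0"
    by eventually_elim (auto simp: gp_def gn_def max_def split: if_splits)
  then have "AE x in lebesgue. g x = 0" by (rule AE_completion)
  with kgL show ?thesis by eventually_elim simp
qed


lemma cinf_diff: "cinf f \<Longrightarrow> f differentiable (at x)"
  by (erule cinf.cases) auto

lemma cinf_pd: "cinf f \<Longrightarrow> cinf (pd i f)"
  by (erule cinf.cases) auto

lemma cinf_cont: "cinf f \<Longrightarrow> continuous_on UNIV f"
  by (meson cinf_diff continuous_at_imp_continuous_on differentiable_imp_continuous_within)

lemma cont_meas_leb: "continuous_on UNIV (f::'a::euclidean_space \<Rightarrow> real) \<Longrightarrow> f \<in> borel_measurable lebesgue"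
  by (intro measurable_completion) (simp add: borel_measurable_continuous_onI)

lemma cinf_meas: "cinf f \<Longrightarrow> f \<in> borel_measurable lebesgue"
  by (intro cont_meas_leb cinf_cont)

lemma test_fun_bounded:
  assumes "test_fun \<Omega> \<phi>" obtains B where "\<And>x. \<bar>\<phi> x\<bar> \<le> B"
proof -
  let ?S = "closure {x. \<phi> x \<noteq> 0}"
  have "compact ?S" and c: "continuous_on UNIV \<phi>" using assms by (auto simp: test_fun_def cinf_cont)
  then have "compact (\<phi> ` ?S)" by (meson compact_continuous_image continuous_on_subset subset_UNIV)
  then obtain B where B: "\<And>y. y \<in> \<phi> ` ?S \<Longrightarrow> norm y \<le> B" by (meson bounded_iff compact_imp_bounded)
  have "\<bar>\<phi> x\<bar> \<le> max B 0" for x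
  proof (cases "x \<in> ?S")
    case True then have "norm (\<phi> x) \<le> B" using B by blast
    then show ?thesis by simp
  next
    case False then have "\<phi> x = 0" using closure_subset[of "{x. \<phi> x \<noteq> 0}"] by auto
    then show ?thesis by simp
  qed
  then show ?thesis by (rule that)
qed

lemma integrable_on_compact_leb:
  fixes h :: "'a::euclidean_space \<Rightarrow> real"
  assumes "compact K" "integrable (lebesgue_on K) h"
  shows "integrable lebesgue (\<lambda>x. indicator K x * h x)"
proof -
  have "K \<in> sets lebesgue" using assms(1) by (simp add: compact_imp_closed borel_closed sets_completionI_sets)
  then show ?thesis using assms(2) integrable_restrict_space[of K lebesgue h] by simp
qed



lemma FL:
  fixes h1 h2 :: "pt \<Rightarrow> real"
  assumes \<Omega>: "open \<Omega>"
    and loc1: "\<And>K. compact K \<Longrightarrow> K \<subseteq> \<Omega> \<Longrightarrow> integrable (lebesgue_on K) h1"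
    and loc2: "\<And>K. compact K \<Longrightarrow> K \<subseteq> \<Omega> \<Longrightarrow> integrable (lebesgue_on K) h2"
    and eq: "\<And>\<phi>. test_fun \<Omega> \<phi> \<Longrightarrow>
       integral\<^sup>L (lebesgue_on \<Omega>) (\<lambda>x. h1 x * \<phi> x) = integral\<^sup>L (lebesgue_on \<Omega>) (\<lambda>x. h2 x * \<phi> x)"
  shows "AE x in lebesgue_on \<Omega>. h1 x = h2 x"
proof -
  have box_ae: "AE x in lebesgue. x \<in> box a b \<longrightarrow> h1 x = h2 x" if ab: "cbox a b \<subseteq> \<Omega>" for a b
  proof -
    define k where "k x = indicator (box a b) x * (h1 x - h2 x)" for x
    define kc where "kc x = indicator (cbox a b) x * (h1 x - h2 x)" for x
    have ic: "integrable lebesgue kc"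
      using integrable_on_compact_leb[OF compact_cbox loc1[OF compact_cbox ab]]
        integrable_on_compact_leb[OF compact_cbox loc2[OF compact_cbox ab]]
      unfolding kc_def by (auto simp: algebra_simps)
    have kk: "k x = indicator (box a b) x * kc x" for x
      by (auto simp: k_def kc_def indicator_def dest: set_mp[OF box_subset_cbox])
    have sbl: "box c d \<in> sets lebesgue" for c d :: pt by (rule open_lebesgue) (rule open_box)
    have ik: "integrable lebesgue k"
      unfolding kk using integrable_mult_indicator[OF sbl ic] by simp
    have "AE x in lebesgue. k x = 0"
    proof (rule FL0[OF ik])
      fix c d :: pt
      define c' where "c' = (\<chi> i. max (a$i) (c$i))"
      define d' where "d' = (\<chi> i. min (b$i) (d$i))"
      have bb: "box c d \<inter> box a b = box c' d'"
        by (auto simp: c'_def d'_def mem_box_cart)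
      have ind: "indicator (box c d) x * k x = indicator (box c' d') x * kc x" for x
        by (auto simp: kk bb[symmetric] indicator_def)
      show "integral\<^sup>L lebesgue (\<lambda>x. indicator (box c d) x * k x) = 0"
      proof (cases "\<forall>i. c'$i < d'$i")
        case False
        then have "box c' d' = {}" by (auto simp: interval_eq_empty_cart not_less)
        then show ?thesis unfolding ind by simp
      next
        case True
        have sub: "cbox c' d' \<subseteq> cbox a b"
          by (auto simp: c'_def d'_def mem_box_cart)
        define s where "s n x = kc x * boxfun (real (Suc n)) c' d' x" for n x
        have tf: "test_fun \<Omega> (boxfun (real (Suc n)) c' d')" for n
          by (rule test_fun_boxfun) (use True sub ab in auto)
        have supp: "boxfun (real (Suc n)) c' d' x \<noteq> 0 \<Longrightarrow> x \<in> cbox c' d'" for n x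
          using boxfun_nonzero[of "real (Suc n)" c' d'] box_subset_cbox by auto
        have s0: "integral\<^sup>L lebesgue (s n) = 0" for n
        proof -
          have e: "integral\<^sup>L (lebesgue_on \<Omega>) (\<lambda>x. hh x * boxfun (real (Suc n)) c' d' x)
             = integral\<^sup>L lebesgue (\<lambda>x. indicator (cbox a b) x * hh x * boxfun (real (Suc n)) c' d' x)" for hh
          proof -
            have "integral\<^sup>L (lebesgue_on \<Omega>) (\<lambda>x. hh x * boxfun (real (Suc n)) c' d' x)
              = integral\<^sup>L lebesgue (\<lambda>x. indicator \<Omega> x *\<^sub>R (hh x * boxfun (real (Suc n)) c' d' x))"
              by (rule integral_restrict_space) (simp add: open_lebesgue[OF \<Omega>])
            also have "\<dots> = integral\<^sup>L lebesgue (\<lambda>x. indicator (cbox a b) x * hh x * boxfun (real (Suc n)) c' d' x)"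
              by (rule Bochner_Integration.integral_cong[OF refl])
                 (use supp sub ab in \<open>auto simp: indicator_def\<close>)
            finally show ?thesis .
          qed
          have bm: "boxfun (real (Suc n)) c' d' \<in> borel_measurable lebesgue"
            using tf by (auto simp: test_fun_def intro: cinf_meas)
          obtain B where B: "\<And>x. \<bar>boxfun (real (Suc n)) c' d' x\<bar> \<le> B"
            using test_fun_bounded[OF tf] by blast
          have i: "integrable lebesgue (\<lambda>x. indicator (cbox a b) x * hj x * boxfun (real (Suc n)) c' d' x)"
            if "integrable lebesgue (\<lambda>x. indicator (cbox a b) x * hj x)" for hj
          proof (rule Bochner_Integration.integrable_bound[where f = "\<lambda>x. B * (indicator (cbox a b) x * hj x)"])
            show "integrable lebesgue (\<lambda>x. B * (indicator (cbox a b) x * hj x))" using that by simp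
            show "(\<lambda>x. indicator (cbox a b) x * hj x * boxfun (real (Suc n)) c' d' x) \<in> borel_measurable lebesgue"
              using that bm by simp
            show "AE x in lebesgue. norm (indicator (cbox a b) x * hj x * boxfun (real (Suc n)) c' d' x)
                \<le> norm (B * (indicator (cbox a b) x * hj x))"
            proof (rule AE_I2)
              fix x
              have "\<bar>boxfun (real (Suc n)) c' d' x\<bar> \<le> \<bar>B\<bar>" using B[of x] by linarith
              moreover have "0 \<le> \<bar>indicator (cbox a b) x * hj x\<bar>" by simp
              ultimately have "\<bar>boxfun (real (Suc n)) c' d' x\<bar> * \<bar>indicator (cbox a b) x * hj x\<bar>
                  \<le> \<bar>B\<bar> * \<bar>indicator (cbox a b) x * hj x\<bar>" by (rule mult_right_mono)
              then show "norm (indicator (cbox a b) x * hj x * boxfun (real (Suc n)) c' d' x)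
                \<le> norm (B * (indicator (cbox a b) x * hj x))"
                by (simp only: real_norm_def abs_mult mult.commute)
            qed
          qed
          have "integral\<^sup>L lebesgue (s n) = integral\<^sup>L lebesgue (\<lambda>x. indicator (cbox a b) x * h1 x * boxfun (real (Suc n)) c' d' x
               - indicator (cbox a b) x * h2 x * boxfun (real (Suc n)) c' d' x)"
            by (rule Bochner_Integration.integral_cong) (auto simp: s_def kc_def algebra_simps)
          also have "\<dots> = 0"
            using eq[OF tf] e[of h1] e[of h2]
              i[OF integrable_on_compact_leb[OF compact_cbox loc1[OF compact_cbox ab]]]
              i[OF integrable_on_compact_leb[OF compact_cbox loc2[OF compact_cbox ab]]]
            by (subst Bochner_Integration.integral_diff) auto
          finally show ?thesis .
        qed
        have "(\<lambda>n. integral\<^sup>L lebesgue (s n)) \<longlonglongrightarrow> integral\<^sup>L lebesgue (\<lambda>x. kc x * indicator (box c' d') x)"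
        proof (rule integral_dominated_convergence[where w = "\<lambda>x. norm (kc x)"])
          show "(\<lambda>x. kc x * indicator (box c' d') x) \<in> borel_measurable lebesgue"
            using ic sbl[of c' d'] by (auto intro!: borel_measurable_times borel_measurable_indicator)
          show "s n \<in> borel_measurable lebesgue" for n
          proof -
            have "boxfun (real (Suc n)) c' d' \<in> borel_measurable lebesgue"
              using tf[of n] by (auto simp: test_fun_def intro: cinf_meas)
            then show ?thesis using ic unfolding s_def by (auto intro!: borel_measurable_times)
          qed
          show "integrable lebesgue (\<lambda>x. norm (kc x))" using ic by simp
          show "AE x in lebesgue. (\<lambda>n. s n x) \<longlonglongrightarrow> kc x * indicator (box c' d') x"
          proof (rule AE_I2)
            fix x :: pt
            have "(\<lambda>n. bmp (real (Suc n)) (c'$1) (d'$1) (x$1) * bmp (real (Suc n)) (c'$2) (d'$2) (x$2))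
               \<longlonglongrightarrow> indicator {c'$1<..<d'$1} (x$1) * indicator {c'$2<..<d'$2} (x$2)"
              by (intro tendsto_mult bmp_lim)
            moreover have "indicator {c'$1<..<d'$1} (x$1) * indicator {c'$2<..<d'$2} (x$2) = (indicator (box c' d') x :: real)"
              by (auto simp: indicator_def mem_box_cart forall_2)
            ultimately show "(\<lambda>n. s n x) \<longlonglongrightarrow> kc x * indicator (box c' d') x"
              unfolding s_def boxfun_def prod2_def by (intro tendsto_mult tendsto_const) simp
          qed
          show "AE x in lebesgue. norm (s n x) \<le> norm (kc x)" for n
          proof (rule AE_I2)
            fix x
            have "\<bar>boxfun (real (Suc n)) c' d' x\<bar> \<le> 1"
              unfolding boxfun_def prod2_def using bmp_nonneg bmp_le1
              by (simp add: abs_mult mult_le_one)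
            then show "norm (s n x) \<le> norm (kc x)"
              unfolding s_def by (simp add: abs_mult mult_left_le)
          qed
        qed
        then have "integral\<^sup>L lebesgue (\<lambda>x. kc x * indicator (box c' d') x) = 0"
          using s0 by (intro LIMSEQ_unique[OF _ tendsto_const]) simp
        then show ?thesis unfolding ind by (simp add: mult.commute)
      qed
    qed
    then show ?thesis by eventually_elim (auto simp: k_def)
  qed
  let ?v = "\<lambda>(p::rat, q::rat). vector [of_rat p, of_rat q] :: pt"
  have "AE x in lebesgue. \<forall>i::(rat \<times> rat) \<times> (rat \<times> rat).
       cbox (?v (fst i)) (?v (snd i)) \<subseteq> \<Omega> \<longrightarrow> x \<in> box (?v (fst i)) (?v (snd i)) \<longrightarrow> h1 x = h2 x"
    unfolding AE_all_countable
  proof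
    fix i :: "(rat \<times> rat) \<times> (rat \<times> rat)"
    show "AE x in lebesgue. cbox (?v (fst i)) (?v (snd i)) \<subseteq> \<Omega> \<longrightarrow> x \<in> box (?v (fst i)) (?v (snd i)) \<longrightarrow> h1 x = h2 x"
    proof (cases "cbox (?v (fst i)) (?v (snd i)) \<subseteq> \<Omega>")
      case True
      show ?thesis using box_ae[OF True] by eventually_elim simp
    qed simp
  qed
  then have "AE x in lebesgue. x \<in> \<Omega> \<longrightarrow> h1 x = h2 x"
  proof eventually_elim
    case (elim x)
    show ?case
    proof
      assume "x \<in> \<Omega>"
      then obtain e where e: "e > 0" "ball x e \<subseteq> \<Omega>" using \<Omega> open_contains_ball by blast
      have "\<exists>r\<in>\<rat>. x$i - e/4 < r \<and> r < x$i" for i using Rats_dense_in_real[of "x$i - e/4" "x$i"] e by auto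
      then obtain l where l: "\<And>i. l i \<in> \<rat>" "\<And>i. x$i - e/4 < l i" "\<And>i. l i < x$i" by metis
      have "\<exists>r\<in>\<rat>. x$i < r \<and> r < x$i + e/4" for i using Rats_dense_in_real[of "x$i" "x$i + e/4"] e by auto
      then obtain u where u: "\<And>i. u i \<in> \<rat>" "\<And>i. x$i < u i" "\<And>i. u i < x$i + e/4" by metis
      obtain p1 where p1: "l 1 = of_rat p1" using l(1) Rats_cases by metis
      obtain p2 where p2: "l 2 = of_rat p2" using l(1) Rats_cases by metis
      obtain q1 where q1: "u 1 = of_rat q1" using u(1) Rats_cases by metis
      obtain q2 where q2: "u 2 = of_rat q2" using u(1) Rats_cases by metis
      let ?i = "((p1, p2), (q1, q2))"
      have vl: "(vector [of_rat p1, of_rat p2] :: pt) $ j = l j" for j using exhaust_2[of j] p1 p2 by auto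
      have vu: "(vector [of_rat q1, of_rat q2] :: pt) $ j = u j" for j using exhaust_2[of j] q1 q2 by auto
      have "cbox (?v (fst ?i)) (?v (snd ?i)) \<subseteq> ball x e"
      proof
        fix y assume "y \<in> cbox (?v (fst ?i)) (?v (snd ?i))"
        then have b: "l j \<le> y$j \<and> y$j \<le> u j" for j by (simp add: mem_box_cart vl vu)
        have c: "\<bar>(x - y)$j\<bar> < e/2" for j
        proof -
          have "x$j - e/4 < y$j" "y$j < x$j + e/4" using b[of j] l(2)[of j] u(3)[of j] by linarith+
          then show ?thesis using e(1) by (simp only: vector_minus_component abs_less_iff) linarith
        qed
        have "norm (x - y) \<le> \<bar>(x - y)$1\<bar> + \<bar>(x - y)$2\<bar>"
          using norm_le_l1_cart[of "x - y"] by (simp add: sum_2)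
        then have "norm (x - y) < e/2 + e/2" using c[of 1] c[of 2] by linarith
        then show "y \<in> ball x e" by (simp add: dist_norm)
      qed
      then have "cbox (?v (fst ?i)) (?v (snd ?i)) \<subseteq> \<Omega>" using e by blast
      moreover have "x \<in> box (?v (fst ?i)) (?v (snd ?i))" using l u by (simp add: mem_box_cart vl vu)
      ultimately show "h1 x = h2 x" using elim by blast
    qed
  qed
  then show ?thesis by (subst AE_restrict_space_iff) (auto simp: open_lebesgue[OF \<Omega>])
qed


lemma line_deriv:
  assumes "cinf f"
  shows "((\<lambda>t. f (x + t *\<^sub>R v)) has_real_derivative frechet_derivative f (at (x + s *\<^sub>R v)) v) (at s)"
proof -
  have fd: "(f has_derivative frechet_derivative f (at (x + s *\<^sub>R v))) (at (x + s *\<^sub>R v))"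
    using cinf_diff[OF assms] frechet_derivative_works by blast
  have l: "((\<lambda>t. x + t *\<^sub>R v) has_derivative (\<lambda>t. t *\<^sub>R v)) (at s)"
    by (auto intro!: derivative_eq_intros)
  have "((\<lambda>t. f (x + t *\<^sub>R v)) has_derivative (\<lambda>t. frechet_derivative f (at (x + s *\<^sub>R v)) (t *\<^sub>R v))) (at s)"
    by (rule has_derivative_compose[OF l fd])
  moreover have "linear (frechet_derivative f (at (x + s *\<^sub>R v)))"
    using fd has_derivative_linear by blast
  then have "(\<lambda>t. frechet_derivative f (at (x + s *\<^sub>R v)) (t *\<^sub>R v)) = (*) (frechet_derivative f (at (x + s *\<^sub>R v)) v)"
    by (intro ext) (simp add: linear_cmul)
  ultimately show ?thesis
    by (simp only: has_field_derivative_def)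
qed

lemma dq_lim:
  assumes "cinf f"
  shows "((\<lambda>t. (f (x + t *\<^sub>R v) - f x) / t) \<longlongrightarrow> frechet_derivative f (at x) v) (at 0)"
  using line_deriv[OF assms, of x v 0] by (simp add: DERIV_def)

lemma dq_bound:
  assumes "cinf f" "\<And>y. \<bar>frechet_derivative f (at y) v\<bar> \<le> B"
  shows "\<bar>f (x + t *\<^sub>R v) - f x\<bar> \<le> B * \<bar>t\<bar>"
proof -
  have "norm ((\<lambda>t. f (x + t *\<^sub>R v)) t - (\<lambda>t. f (x + t *\<^sub>R v)) 0) \<le> B * norm (t - 0)"
    by (rule field_differentiable_bound[where S = UNIV and f' = "\<lambda>s. frechet_derivative f (at (x + s *\<^sub>R v)) v"])
       (use line_deriv[OF assms(1)] assms(2) in auto)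
  then show ?thesis by simp
qed

lemma pd_supp:
  assumes "x \<notin> closure {x. f x \<noteq> 0}"
  shows "pd i f x = 0"
proof -
  let ?U = "- closure {x. f x \<noteq> 0}"
  have "((\<lambda>_. 0) has_derivative (\<lambda>_. 0)) (at x)" by simp
  then have "(f has_derivative (\<lambda>_. 0)) (at x)"
    by (rule has_derivative_transform_within_open[where s = ?U])
       (use assms closure_subset[of "{x. f x \<noteq> 0}"] in \<open>auto\<close>)
  then show ?thesis unfolding pd_def using frechet_derivative_at by metis
qed

lemma cc_bounded:
  fixes g :: "'a::euclidean_space \<Rightarrow> real"
  assumes "continuous_on UNIV g" "compact K" "\<And>x. g x \<noteq> 0 \<Longrightarrow> x \<in> K"
  obtains B where "\<And>x. \<bar>g x\<bar> \<le> B"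
proof -
  have "compact (g ` K)" by (meson assms compact_continuous_image continuous_on_subset subset_UNIV)
  then obtain B where B: "\<And>y. y \<in> g ` K \<Longrightarrow> norm y \<le> B" by (meson bounded_iff compact_imp_bounded)
  have "\<bar>g x\<bar> \<le> max B 0" for x
  proof (cases "x \<in> K")
    case True then have "norm (g x) \<le> B" using B by blast
    then show ?thesis by simp
  next
    case False then show ?thesis using assms(3)[of x] by fastforce
  qed
  then show ?thesis by (rule that)
qed

lemma int_cc:
  fixes g :: "'a::euclidean_space \<Rightarrow> real"
  assumes "continuous_on UNIV g" "compact K" "\<And>x. g x \<noteq> 0 \<Longrightarrow> x \<in> K"
  shows "integrable lborel g"
proof -
  have "integrable lborel (\<lambda>x. indicator K x *\<^sub>R g x)"
    by (rule borel_integrable_compact) (use assms in \<open>auto intro: continuous_on_subset\<close>)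
  moreover have "(\<lambda>x. indicator K x *\<^sub>R g x) = g"
  proof (rule ext)
    fix x show "indicator K x *\<^sub>R g x = g x" using assms(3)[of x] by (cases "x \<in> K") auto
  qed
  ultimately show ?thesis by simp
qed

lemma lborel_translate:
  fixes F :: "'a::euclidean_space \<Rightarrow> real"
  assumes "F \<in> borel_measurable borel"
  shows "integral\<^sup>L lborel (\<lambda>x. F (x + c)) = integral\<^sup>L lborel F"
proof -
  have "integral\<^sup>L lborel F = integral\<^sup>L (distr lborel borel ((+) c)) F"
    by (simp add: lborel_distr_plus)
  also have "\<dots> = integral\<^sup>L lborel (\<lambda>x. F (c + x))"
    by (rule integral_distr) (use assms in auto)
  finally show ?thesis by (simp add: add.commute)
qed


lemma cont_borel: "continuous_on UNIV (f::'a::euclidean_space \<Rightarrow> real) \<Longrightarrow> f \<in> borel_measurable borel"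
  by (simp add: borel_measurable_continuous_onI)

locale cc2 =
  fixes a b :: "pt \<Rightarrow> real"
  assumes ca: "cinf a" and cb: "cinf b"
    and Ka: "compact (closure {x. a x \<noteq> 0})" and Kb: "compact (closure {x. b x \<noteq> 0})"
begin

definition G :: "pt \<Rightarrow> pt \<Rightarrow> pt \<Rightarrow> real" where "G u w x = a (x + u) * b (x + w)"

lemma contG: "continuous_on UNIV (G u w)"
proof -
  have "continuous_on UNIV (\<lambda>x. a (x + u))"
    by (rule continuous_on_compose2[OF cinf_cont[OF ca]]) (auto intro!: continuous_intros)
  moreover have "continuous_on UNIV (\<lambda>x. b (x + w))"
    by (rule continuous_on_compose2[OF cinf_cont[OF cb]]) (auto intro!: continuous_intros)
  ultimately show ?thesis unfolding G_def by (rule continuous_on_mult)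
qed

lemma intG: "integrable lborel (G u w)"
proof (rule int_cc[OF contG])
  show "compact ((\<lambda>x. x - u) ` closure {x. a x \<noteq> 0})"
    by (rule compact_continuous_image[OF _ Ka]) (intro continuous_intros)
  fix x assume "G u w x \<noteq> 0"
  then have "x + u \<in> closure {x. a x \<noteq> 0}" using closure_subset by (force simp: G_def)
  then show "x \<in> (\<lambda>x. x - u) ` closure {x. a x \<noteq> 0}" by (rule rev_image_eqI) simp
qed

lemma PG: "integral\<^sup>L lborel (G u w) = integral\<^sup>L lborel (G 0 (w - u))"
proof -
  have "integral\<^sup>L lborel (\<lambda>x. G 0 (w - u) (x + u)) = integral\<^sup>L lborel (G 0 (w - u))"
    by (rule lborel_translate[OF cont_borel[OF contG]])
  moreover have "G 0 (w - u) (x + u) = G u w x" for x by (simp add: G_def algebra_simps)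
  ultimately show ?thesis by simp
qed

lemma comb: "integral\<^sup>L lborel (\<lambda>x. (G u1 w1 x - G u2 w2 x - G u3 w3 x + G u4 w4 x) / c)
   = (integral\<^sup>L lborel (G u1 w1) - integral\<^sup>L lborel (G u2 w2) - integral\<^sup>L lborel (G u3 w3) + integral\<^sup>L lborel (G u4 w4)) / c"
  using intG by (simp add: Bochner_Integration.integral_diff Bochner_Integration.integral_add)

definition Q :: "real \<Rightarrow> real" where
  "Q h = integral\<^sup>L lborel (\<lambda>x. (a (x + h *\<^sub>R axis 1 1) - a x) / h * ((b (x + h *\<^sub>R axis 2 1) - b x) / h))"

definition R :: "real \<Rightarrow> real" where
  "R h = integral\<^sup>L lborel (\<lambda>x. (a (x + (-h) *\<^sub>R axis 2 1) - a x) / (-h) * ((b (x + (-h) *\<^sub>R axis 1 1) - b x) / (-h)))"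

lemma QR: "Q h = R h"
proof -
  let ?e1 = "h *\<^sub>R axis 1 1 :: pt" and ?e2 = "h *\<^sub>R axis 2 1 :: pt"
  have "Q h = integral\<^sup>L lborel (\<lambda>x. (G ?e1 ?e2 x - G ?e1 0 x - G 0 ?e2 x + G 0 0 x) / h^2)"
    unfolding Q_def G_def by (rule Bochner_Integration.integral_cong) (simp_all add: field_simps power2_eq_square)
  also have "\<dots> = (integral\<^sup>L lborel (G 0 (?e2 - ?e1)) - integral\<^sup>L lborel (G 0 (- ?e1))
       - integral\<^sup>L lborel (G 0 ?e2) + integral\<^sup>L lborel (G 0 0)) / h^2"
    unfolding comb by (subst (1 2 3) PG) simp
  also have "\<dots> = integral\<^sup>L lborel (\<lambda>x. (G (- ?e2) (- ?e1) x - G (- ?e2) 0 x - G 0 (- ?e1) x + G 0 0 x) / h^2)"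
    unfolding comb by (subst (5 6 7) PG) (simp add: algebra_simps)
  also have "\<dots> = R h"
    unfolding R_def G_def by (rule Bochner_Integration.integral_cong) (simp_all add: field_simps power2_eq_square)
  finally show ?thesis .
qed

end


lemma dq_props:
  assumes cf: "cinf f" and K: "compact (closure {x. f x \<noteq> 0})"
  obtains B r where "\<And>x t. \<bar>(f (x + t *\<^sub>R axis i 1) - f x) / t\<bar> \<le> B"
    "\<And>x t. \<bar>t\<bar> \<le> 1 \<Longrightarrow> (f (x + t *\<^sub>R axis i 1) - f x) / t \<noteq> 0 \<Longrightarrow> norm x \<le> r"
proof -
  let ?S = "closure {x. f x \<noteq> 0}"
  have supp: "\<And>x. pd i f x \<noteq> 0 \<Longrightarrow> x \<in> ?S" using pd_supp by blast
  obtain B where B: "\<And>y. \<bar>pd i f y\<bar> \<le> B"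
    using cc_bounded[OF cinf_cont[OF cinf_pd[OF cf]] K supp] by blast
  have b: "\<bar>(f (x + t *\<^sub>R axis i 1) - f x) / t\<bar> \<le> B" for x t
  proof (cases "t = 0")
    case True then show ?thesis using B[of x] by simp
  next
    case False
    have "\<bar>f (x + t *\<^sub>R axis i 1) - f x\<bar> \<le> B * \<bar>t\<bar>"
      by (rule dq_bound[OF cf]) (use B in \<open>simp add: pd_def\<close>)
    then show ?thesis using False by (simp add: abs_divide divide_le_eq)
  qed
  obtain r where r: "\<And>y. y \<in> ?S \<Longrightarrow> norm y \<le> r"
    using compact_imp_bounded[OF K] by (auto simp: bounded_iff)
  have "norm x \<le> r + 1" if t: "\<bar>t\<bar> \<le> 1" and nz: "(f (x + t *\<^sub>R axis i 1) - f x) / t \<noteq> 0" for x t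
  proof -
    have "f (x + t *\<^sub>R axis i 1) \<noteq> 0 \<or> f x \<noteq> 0" using nz by auto
    then have "x + t *\<^sub>R axis i 1 \<in> ?S \<or> x \<in> ?S" using closure_subset[of "{x. f x \<noteq> 0}"] by blast
    moreover have "norm (t *\<^sub>R axis i 1 :: pt) \<le> 1" using t by simp
    moreover have n1: "norm x \<le> norm (x + t *\<^sub>R axis i 1) + norm (t *\<^sub>R axis i 1 :: pt)"
      using norm_triangle_ineq4[of "x + t *\<^sub>R axis i 1" "t *\<^sub>R axis i 1"] by simp
    ultimately show ?thesis
    proof (cases "x \<in> ?S")
      case True then show ?thesis using r[OF True] by linarith
    next
      case False
      then have "x + t *\<^sub>R axis i 1 \<in> ?S" using \<open>x + t *\<^sub>R axis i 1 \<in> ?S \<or> x \<in> ?S\<close> by blast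
      from r[OF this] n1 \<open>norm (t *\<^sub>R axis i 1 :: pt) \<le> 1\<close> show ?thesis by linarith
    qed
  qed
  then show ?thesis by (rule that[OF b])
qed

lemma dq_seq:
  assumes cf: "cinf f" and s: "s \<longlonglongrightarrow> 0" "\<And>n. s n \<noteq> 0"
  shows "(\<lambda>n. (f (x + s n *\<^sub>R axis i 1) - f x) / s n) \<longlonglongrightarrow> pd i f x"
proof -
  have "filterlim s (at 0) sequentially" by (rule filterlim_atI) (use s in auto)
  from filterlim_compose[OF dq_lim[OF cf, of x "axis i 1"] this] show ?thesis by (simp add: pd_def)
qed

context cc2 begin

lemma lim_dq_prod:
  assumes s: "s \<longlonglongrightarrow> 0" "\<And>n. s n \<noteq> 0" "\<And>n. \<bar>s n\<bar> \<le> 1"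
  shows "(\<lambda>n. integral\<^sup>L lborel (\<lambda>x. (a (x + s n *\<^sub>R axis i 1) - a x) / s n * ((b (x + s n *\<^sub>R axis j 1) - b x) / s n)))
     \<longlonglongrightarrow> integral\<^sup>L lborel (\<lambda>x. pd i a x * pd j b x)"
proof -
  obtain Ba ra where Ba: "\<And>x t. \<bar>(a (x + t *\<^sub>R axis i 1) - a x) / t\<bar> \<le> Ba"
    and ra: "\<And>x t. \<bar>t\<bar> \<le> 1 \<Longrightarrow> (a (x + t *\<^sub>R axis i 1) - a x) / t \<noteq> 0 \<Longrightarrow> norm x \<le> ra"
    using dq_props[OF ca Ka] by metis
  obtain Bb rb where Bb: "\<And>x t. \<bar>(b (x + t *\<^sub>R axis j 1) - b x) / t\<bar> \<le> Bb"
    using dq_props[OF cb Kb] by metis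
  let ?w = "\<lambda>x. indicator (cball 0 ra) x *\<^sub>R (Ba * Bb)"
  have ca': "continuous_on UNIV (\<lambda>x. a (x + c))" for c
    by (rule continuous_on_compose2[OF cinf_cont[OF ca]]) (auto intro!: continuous_intros)
  have cb': "continuous_on UNIV (\<lambda>x. b (x + c))" for c
    by (rule continuous_on_compose2[OF cinf_cont[OF cb]]) (auto intro!: continuous_intros)
  show ?thesis
  proof (rule integral_dominated_convergence[where w = ?w])
    show "(\<lambda>x. pd i a x * pd j b x) \<in> borel_measurable lborel"
      using cinf_cont[OF cinf_pd[OF ca]] cinf_cont[OF cinf_pd[OF cb]]
      by (simp add: cont_borel continuous_on_mult)
    show "(\<lambda>x. (a (x + s n *\<^sub>R axis i 1) - a x) / s n * ((b (x + s n *\<^sub>R axis j 1) - b x) / s n)) \<in> borel_measurable lborel" for n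
    proof -
      have "continuous_on UNIV (\<lambda>x. (a (x + s n *\<^sub>R axis i 1) - a x) / s n * ((b (x + s n *\<^sub>R axis j 1) - b x) / s n))"
        using s(2)[of n] by (intro continuous_intros ca' cb' cinf_cont[OF ca] cinf_cont[OF cb]) auto
      from cont_borel[OF this] show ?thesis by simp
    qed
    show "integrable lborel ?w"
      by (rule borel_integrable_compact) (auto intro: continuous_intros)
    show "AE x in lborel. (\<lambda>n. (a (x + s n *\<^sub>R axis i 1) - a x) / s n * ((b (x + s n *\<^sub>R axis j 1) - b x) / s n))
        \<longlonglongrightarrow> pd i a x * pd j b x"
      by (intro AE_I2 tendsto_mult dq_seq[OF ca s(1,2)] dq_seq[OF cb s(1,2)])
    show "AE x in lborel. norm ((a (x + s n *\<^sub>R axis i 1) - a x) / s n * ((b (x + s n *\<^sub>R axis j 1) - b x) / s n)) \<le> ?w x" for n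
    proof (rule AE_I2)
      fix x
      show "norm ((a (x + s n *\<^sub>R axis i 1) - a x) / s n * ((b (x + s n *\<^sub>R axis j 1) - b x) / s n)) \<le> ?w x"
      proof (cases "(a (x + s n *\<^sub>R axis i 1) - a x) / s n = 0")
        case True
        have "0 \<le> Ba" "0 \<le> Bb" using Ba[of x 0] Bb[of x 0] by auto
        have z: "(a (x + s n *\<^sub>R axis i 1) - a x) / s n * ((b (x + s n *\<^sub>R axis j 1) - b x) / s n) = 0"
          using True by (simp only: mult_eq_0_iff) simp
        then show ?thesis using \<open>0 \<le> Ba\<close> \<open>0 \<le> Bb\<close> by (subst z) (simp add: indicator_def)
      next
        case False
        then have "norm x \<le> ra" using ra s(3) by blast
        have "\<bar>(a (x + s n *\<^sub>R axis i 1) - a x) / s n\<bar> * \<bar>(b (x + s n *\<^sub>R axis j 1) - b x) / s n\<bar> \<le> Ba * Bb"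
          by (rule mult_mono[OF Ba Bb]) (use Ba[of x 0] in auto)
        then show ?thesis
          using \<open>norm x \<le> ra\<close> by (simp only: real_norm_def abs_mult indicator_simps mem_cball_0 if_True scaleR_one)
      qed
    qed
  qed
qed

lemma ibp_lborel:
  "integral\<^sup>L lborel (\<lambda>x. pd 1 a x * pd 2 b x) = integral\<^sup>L lborel (\<lambda>x. pd 2 a x * pd 1 b x)"
proof -
  define t where "t n = 1 / real (Suc n)" for n
  have t0: "t \<longlonglongrightarrow> 0" unfolding t_def by (rule LIMSEQ_Suc[OF lim_const_over_n])
  have tnz: "t n \<noteq> 0" "\<bar>t n\<bar> \<le> 1" for n by (auto simp: t_def)
  have 1: "(\<lambda>n. Q (t n)) \<longlonglongrightarrow> integral\<^sup>L lborel (\<lambda>x. pd 1 a x * pd 2 b x)"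
    unfolding Q_def by (rule lim_dq_prod[OF t0 tnz])
  have m0: "(\<lambda>n. - t n) \<longlonglongrightarrow> 0" using tendsto_minus[OF t0] by simp
  have 2: "(\<lambda>n. R (t n)) \<longlonglongrightarrow> integral\<^sup>L lborel (\<lambda>x. pd 2 a x * pd 1 b x)"
    unfolding R_def by (rule lim_dq_prod[OF m0]) (use tnz in auto)
  from 2 have "(\<lambda>n. Q (t n)) \<longlonglongrightarrow> integral\<^sup>L lborel (\<lambda>x. pd 2 a x * pd 1 b x)" by (simp only: QR)
  from LIMSEQ_unique[OF 1 this] show ?thesis .
qed

end


definition L2M :: "'a measure \<Rightarrow> ('a \<Rightarrow> real) \<Rightarrow> bool" where
  "L2M M f \<longleftrightarrow> f \<in> borel_measurable M \<and> integrable M (\<lambda>x. (f x)\<^sup>2)"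

lemma L2_L2M: "L2 \<Omega> f = L2M (lebesgue_on \<Omega>) f"
  by (simp add: L2_def L2M_def)

lemma L2M_meas: "L2M M f \<Longrightarrow> f \<in> borel_measurable M"
  by (simp add: L2M_def)

lemma L2M_prod: assumes "L2M M f" "L2M M g" shows "integrable M (\<lambda>x. f x * g x)"
proof (rule Bochner_Integration.integrable_bound[where f = "\<lambda>x. (f x)\<^sup>2 + (g x)\<^sup>2"])
  show "integrable M (\<lambda>x. (f x)\<^sup>2 + (g x)\<^sup>2)" using assms by (simp add: L2M_def)
  show "(\<lambda>x. f x * g x) \<in> borel_measurable M" using assms unfolding L2M_def by (auto intro!: borel_measurable_times)
  show "AE x in M. norm (f x * g x) \<le> norm ((f x)\<^sup>2 + (g x)\<^sup>2)"
  proof (rule AE_I2)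
    fix x
    have "2 * \<bar>f x\<bar> * \<bar>g x\<bar> \<le> (f x)\<^sup>2 + (g x)\<^sup>2"
      using sum_squares_bound[of "\<bar>f x\<bar>" "\<bar>g x\<bar>"] by simp
    moreover have "0 \<le> \<bar>f x\<bar> * \<bar>g x\<bar>" by simp
    ultimately have "\<bar>f x\<bar> * \<bar>g x\<bar> \<le> (f x)\<^sup>2 + (g x)\<^sup>2" by linarith
    then show "norm (f x * g x) \<le> norm ((f x)\<^sup>2 + (g x)\<^sup>2)"
      by (simp add: abs_mult)
  qed
qed

lemma L2M_lin: assumes "L2M M f" "L2M M g" shows "L2M M (\<lambda>x. s * f x + t * g x)"
proof -
  have "integrable M (\<lambda>x. s^2 * (f x * f x) + 2 * s * t * (f x * g x) + t^2 * (g x * g x))"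
    using L2M_prod[OF assms(1) assms(1)] L2M_prod[OF assms(1) assms(2)] L2M_prod[OF assms(2) assms(2)] by simp
  moreover have "(\<lambda>x. s^2 * (f x * f x) + 2 * s * t * (f x * g x) + t^2 * (g x * g x)) = (\<lambda>x. (s * f x + t * g x)\<^sup>2)"
    by (auto simp: power2_eq_square algebra_simps)
  moreover have "(\<lambda>x. s * f x + t * g x) \<in> borel_measurable M"
    using assms unfolding L2M_def by (auto intro!: borel_measurable_times borel_measurable_add)
  ultimately show ?thesis by (simp add: L2M_def)
qed

lemma L2M_diff: assumes "L2M M f" "L2M M g" shows "L2M M (\<lambda>x. f x - g x)"
  using L2M_lin[OF assms, of 1 "-1"] by simp

lemma CS_int:
  assumes p: "L2M M p" and q: "L2M M q"
  shows "\<bar>integral\<^sup>L M (\<lambda>x. p x * q x)\<bar> \<le> sqrt (integral\<^sup>L M (\<lambda>x. (p x)\<^sup>2)) * sqrt (integral\<^sup>L M (\<lambda>x. (q x)\<^sup>2))"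
proof -
  define A where "A = integral\<^sup>L M (\<lambda>x. (p x)\<^sup>2)"
  define B where "B = integral\<^sup>L M (\<lambda>x. (q x)\<^sup>2)"
  define C where "C = integral\<^sup>L M (\<lambda>x. p x * q x)"
  have ip: "integrable M (\<lambda>x. (p x)\<^sup>2)" and iq: "integrable M (\<lambda>x. (q x)\<^sup>2)" and ipq: "integrable M (\<lambda>x. p x * q x)"
    using p q L2M_prod[OF p q] by (auto simp: L2M_def)
  have A0: "A \<ge> 0" unfolding A_def by simp
  have B0: "B \<ge> 0" unfolding B_def by simp
  have quad: "0 \<le> t^2 * A - 2 * t * C + B" for t
  proof -
    have "0 \<le> integral\<^sup>L M (\<lambda>x. (t * p x - q x)\<^sup>2)" by simp
    also have "(\<lambda>x. (t * p x - q x)\<^sup>2) = (\<lambda>x. t^2 * (p x)\<^sup>2 - 2 * t * (p x * q x) + (q x)\<^sup>2)"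
      by (auto simp: power2_eq_square algebra_simps)
    also have "integral\<^sup>L M \<dots> = t^2 * A - 2 * t * C + B"
      using ip iq ipq by (simp add: A_def B_def C_def)
    finally show ?thesis .
  qed
  have "C^2 \<le> A * B"
  proof (cases "A > 0")
    case True
    have "0 \<le> (C/A)^2 * A - 2 * (C/A) * C + B" by (rule quad)
    also have "(C/A)^2 * A - 2 * (C/A) * C + B = B - C^2 / A"
      using True by (simp add: power2_eq_square field_simps)
    finally have "C^2 / A \<le> B" by simp
    then show ?thesis using True by (simp add: divide_le_eq mult.commute)
  next
    case False
    then have "A = 0" using A0 by simp
    have "C = 0"
    proof (rule ccontr)
      assume "C \<noteq> 0"
      have "0 \<le> ((B + 1) / (2 * C))^2 * A - 2 * ((B + 1) / (2 * C)) * C + B" by (rule quad)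
      also have "\<dots> = -1" using \<open>A = 0\<close> \<open>C \<noteq> 0\<close> by (simp add: field_simps)
      finally show False by simp
    qed
    then show ?thesis using A0 B0 by simp
  qed
  then have "sqrt (C^2) \<le> sqrt (A * B)" by (rule real_sqrt_le_mono)
  then show ?thesis by (simp add: A_def B_def C_def real_sqrt_mult)
qed

lemma prod_lim:
  assumes fn: "\<And>n. L2M M (fs n)" and f: "L2M M f" and en: "\<And>n. L2M M (es n)" and e: "L2M M e"
    and cf: "(\<lambda>n. integral\<^sup>L M (\<lambda>x. (fs n x - f x)\<^sup>2)) \<longlonglongrightarrow> 0"
    and ce: "(\<lambda>n. integral\<^sup>L M (\<lambda>x. (es n x - e x)\<^sup>2)) \<longlonglongrightarrow> 0"
  shows "(\<lambda>n. integral\<^sup>L M (\<lambda>x. fs n x * es n x)) \<longlonglongrightarrow> integral\<^sup>L M (\<lambda>x. f x * e x)"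
proof -
  define A where "A n = integral\<^sup>L M (\<lambda>x. (fs n x - f x)\<^sup>2)" for n
  define B where "B n = integral\<^sup>L M (\<lambda>x. (es n x - e x)\<^sup>2)" for n
  have df: "L2M M (\<lambda>x. fs n x - f x)" for n by (rule L2M_diff[OF fn f])
  have de: "L2M M (\<lambda>x. es n x - e x)" for n by (rule L2M_diff[OF en e])
  have eq: "integral\<^sup>L M (\<lambda>x. fs n x * es n x) - integral\<^sup>L M (\<lambda>x. f x * e x)
     = integral\<^sup>L M (\<lambda>x. (fs n x - f x) * (es n x - e x)) + integral\<^sup>L M (\<lambda>x. (fs n x - f x) * e x)
       + integral\<^sup>L M (\<lambda>x. f x * (es n x - e x))" for n
  proof -
    have "integral\<^sup>L M (\<lambda>x. (fs n x - f x) * (es n x - e x)) + integral\<^sup>L M (\<lambda>x. (fs n x - f x) * e x)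
       + integral\<^sup>L M (\<lambda>x. f x * (es n x - e x))
      = integral\<^sup>L M (\<lambda>x. (fs n x - f x) * (es n x - e x) + (fs n x - f x) * e x + f x * (es n x - e x))"
      using L2M_prod[OF df de] L2M_prod[OF df e] L2M_prod[OF f de] by simp
    also have "\<dots> = integral\<^sup>L M (\<lambda>x. fs n x * es n x - f x * e x)"
      by (rule Bochner_Integration.integral_cong) (auto simp: algebra_simps)
    also have "\<dots> = integral\<^sup>L M (\<lambda>x. fs n x * es n x) - integral\<^sup>L M (\<lambda>x. f x * e x)"
      using L2M_prod[OF fn en] L2M_prod[OF f e] by simp
    finally show ?thesis by simp
  qed
  let ?Y = "\<lambda>n. sqrt (A n) * sqrt (B n) + sqrt (A n) * sqrt (integral\<^sup>L M (\<lambda>x. (e x)\<^sup>2))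
    + sqrt (integral\<^sup>L M (\<lambda>x. (f x)\<^sup>2)) * sqrt (B n)"
  have bnd: "norm (integral\<^sup>L M (\<lambda>x. fs n x * es n x) - integral\<^sup>L M (\<lambda>x. f x * e x)) \<le> ?Y n" for n
  proof -
    let ?a = "integral\<^sup>L M (\<lambda>x. (fs n x - f x) * (es n x - e x))"
    let ?b = "integral\<^sup>L M (\<lambda>x. (fs n x - f x) * e x)"
    let ?c = "integral\<^sup>L M (\<lambda>x. f x * (es n x - e x))"
    have "\<bar>?a + ?b + ?c\<bar> \<le> \<bar>?a\<bar> + \<bar>?b\<bar> + \<bar>?c\<bar>"
      using abs_triangle_ineq[of "?a + ?b" ?c] abs_triangle_ineq[of ?a ?b] by linarith
    then show ?thesis unfolding eq[of n] A_def B_def real_norm_def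
      using CS_int[OF df[of n] de[of n]] CS_int[OF df[of n] e] CS_int[OF f de[of n]] by linarith
  qed
  have "?Y \<longlonglongrightarrow> sqrt 0 * sqrt 0 + sqrt 0 * sqrt (integral\<^sup>L M (\<lambda>x. (e x)\<^sup>2)) + sqrt (integral\<^sup>L M (\<lambda>x. (f x)\<^sup>2)) * sqrt 0"
    unfolding A_def B_def by (intro tendsto_intros cf ce)
  then have "?Y \<longlonglongrightarrow> 0" by simp
  then have "(\<lambda>n. integral\<^sup>L M (\<lambda>x. fs n x * es n x) - integral\<^sup>L M (\<lambda>x. f x * e x)) \<longlonglongrightarrow> 0"
    by (rule Lim_null_comparison[rotated]) (use bnd in auto)
  then show ?thesis by (rule LIM_zero_cancel)
qed


lemma on_Omega:
  fixes F :: "pt \<Rightarrow> real"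
  assumes \<Omega>: "open \<Omega>" and c: "continuous_on UNIV F" and s: "\<And>x. F x \<noteq> 0 \<Longrightarrow> x \<in> \<Omega>"
  shows "integral\<^sup>L (lebesgue_on \<Omega>) F = integral\<^sup>L lborel F"
proof -
  have "integral\<^sup>L (lebesgue_on \<Omega>) F = integral\<^sup>L lebesgue (\<lambda>x. indicator \<Omega> x *\<^sub>R F x)"
    by (rule integral_restrict_space) (simp add: open_lebesgue[OF \<Omega>])
  also have "\<dots> = integral\<^sup>L lebesgue F"
  proof (rule Bochner_Integration.integral_cong[OF refl])
    fix x show "indicator \<Omega> x *\<^sub>R F x = F x" using s[of x] by (cases "x \<in> \<Omega>") auto
  qed
  also have "\<dots> = integral\<^sup>L lborel F"
    by (rule integral_completion) (simp add: cont_borel[OF c])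
  finally show ?thesis .
qed

lemma test_supp:
  assumes "test_fun \<Omega> \<phi>" "pd i \<phi> x \<noteq> 0" shows "x \<in> \<Omega>"
  using assms pd_supp unfolding test_fun_def by blast

lemma test_fun_pd_L2:
  assumes \<Omega>: "open \<Omega>" and t: "test_fun \<Omega> \<phi>"
  shows "L2 \<Omega> (pd i \<phi>)"
proof -
  have ci: "cinf \<phi>" and K: "compact (closure {x. \<phi> x \<noteq> 0})" using t by (auto simp: test_fun_def)
  have c: "continuous_on UNIV (pd i \<phi>)" by (rule cinf_cont[OF cinf_pd[OF ci]])
  have m: "pd i \<phi> \<in> borel_measurable (lebesgue_on \<Omega>)"
    by (rule measurable_restrict_space1) (rule cont_meas_leb[OF c])
  have c2: "continuous_on UNIV (\<lambda>x. (pd i \<phi> x)\<^sup>2)" using c by (intro continuous_intros)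
  have il: "integrable lborel (\<lambda>x. (pd i \<phi> x)\<^sup>2)"
    by (rule int_cc[OF c2 K]) (use pd_supp in auto)
  have "integrable lebesgue (\<lambda>x. (pd i \<phi> x)\<^sup>2)"
    using il integrable_completion[of "\<lambda>x. (pd i \<phi> x)\<^sup>2" lborel] cont_borel[OF c2] by simp
  moreover have "(\<lambda>x. indicator \<Omega> x *\<^sub>R (pd i \<phi> x)\<^sup>2) = (\<lambda>x. (pd i \<phi> x)\<^sup>2)"
  proof (rule ext)
    fix x show "indicator \<Omega> x *\<^sub>R (pd i \<phi> x)\<^sup>2 = (pd i \<phi> x)\<^sup>2"
      using test_supp[OF t, of i x] by (cases "x \<in> \<Omega>") auto
  qed
  ultimately have "integrable (lebesgue_on \<Omega>) (\<lambda>x. (pd i \<phi> x)\<^sup>2)"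
    by (subst integrable_restrict_space) (auto simp: open_lebesgue[OF \<Omega>])
  then show ?thesis using m by (simp add: L2_def)
qed

lemma ibp_Omega:
  assumes \<Omega>: "open \<Omega>" and ta: "test_fun \<Omega> a" and tb: "test_fun \<Omega> b"
  shows "integral\<^sup>L (lebesgue_on \<Omega>) (\<lambda>x. pd 1 a x * pd 2 b x) = integral\<^sup>L (lebesgue_on \<Omega>) (\<lambda>x. pd 2 a x * pd 1 b x)"
proof -
  interpret cc2 a b using ta tb by unfold_locales (auto simp: test_fun_def)
  have ca: "continuous_on UNIV (pd i a)" for i using ta by (auto simp: test_fun_def intro!: cinf_cont cinf_pd)
  have cb: "continuous_on UNIV (pd i b)" for i using tb by (auto simp: test_fun_def intro!: cinf_cont cinf_pd)
  have "integral\<^sup>L (lebesgue_on \<Omega>) (\<lambda>x. pd 1 a x * pd 2 b x) = integral\<^sup>L lborel (\<lambda>x. pd 1 a x * pd 2 b x)"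
    by (rule on_Omega[OF \<Omega>]) (use ca cb test_supp[OF ta] in \<open>auto intro: continuous_on_mult\<close>)
  also have "\<dots> = integral\<^sup>L lborel (\<lambda>x. pd 2 a x * pd 1 b x)" by (rule ibp_lborel)
  also have "\<dots> = integral\<^sup>L (lebesgue_on \<Omega>) (\<lambda>x. pd 2 a x * pd 1 b x)"
    by (rule on_Omega[OF \<Omega>, symmetric]) (use ca cb test_supp[OF ta] in \<open>auto intro: continuous_on_mult\<close>)
  finally show ?thesis .
qed


lemma weak_ae:
  assumes \<Omega>: "open \<Omega>" and w1: "weak_pd \<Omega> i f g1" and w2: "weak_pd \<Omega> i f g2"
  shows "AE x in lebesgue_on \<Omega>. g1 x = g2 x"
proof (rule FL[OF \<Omega>])
  show "integrable (lebesgue_on K) g1" if "compact K" "K \<subseteq> \<Omega>" for K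
    using w1 that by (simp add: weak_pd_def)
  show "integrable (lebesgue_on K) g2" if "compact K" "K \<subseteq> \<Omega>" for K
    using w2 that by (simp add: weak_pd_def)
  fix \<phi> assume t: "test_fun \<Omega> \<phi>"
  have "- integral\<^sup>L (lebesgue_on \<Omega>) (\<lambda>x. g1 x * \<phi> x) = - integral\<^sup>L (lebesgue_on \<Omega>) (\<lambda>x. g2 x * \<phi> x)"
    using w1 w2 t unfolding weak_pd_def by metis
  then show "integral\<^sup>L (lebesgue_on \<Omega>) (\<lambda>x. g1 x * \<phi> x) = integral\<^sup>L (lebesgue_on \<Omega>) (\<lambda>x. g2 x * \<phi> x)"
    by simp
qed

lemma meas_AE_on:
  fixes f g :: "pt \<Rightarrow> real"
  assumes \<Omega>: "open \<Omega>" and f: "f \<in> borel_measurable (lebesgue_on \<Omega>)"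
    and ae: "AE x in lebesgue_on \<Omega>. f x = g x"
  shows "g \<in> borel_measurable (lebesgue_on \<Omega>)"
proof -
  have S: "\<Omega> \<inter> space lebesgue \<in> sets lebesgue" using open_lebesgue[OF \<Omega>] by simp
  have "(\<lambda>x. indicator \<Omega> x *\<^sub>R f x) \<in> borel_measurable lebesgue"
    using f borel_measurable_restrict_space_iff[OF S] by blast
  moreover have "AE x in lebesgue. indicator \<Omega> x *\<^sub>R f x = indicator \<Omega> x *\<^sub>R g x"
    using ae unfolding AE_restrict_space_iff[OF S] by eventually_elim (auto simp: indicator_def)
  ultimately have "(\<lambda>x. indicator \<Omega> x *\<^sub>R g x) \<in> borel_measurable lebesgue"
    by (rule borel_measurable_AE)
  then show ?thesis using borel_measurable_restrict_space_iff[OF S] by blast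
qed

lemma norm3: "(norm (v::real^3))\<^sup>2 = (v$1)\<^sup>2 + (v$2)\<^sup>2 + (v$3)\<^sup>2"
  by (simp add: norm_vec_def L2_set_def sum_3)

lemma Gdens_id:
  "Gdens v M = (v$1)\<^sup>2 + (v$2)\<^sup>2 + (v$3)\<^sup>2
     + ((M$1$1 + M$2$2)\<^sup>2 + (M$2$3 + v$1)\<^sup>2 + (v$2 - M$1$3)\<^sup>2 + (M$1$2 - M$2$1 + v$3)\<^sup>2)
     + 2 * (M$1$2 * M$2$1 - M$1$1 * M$2$2)"
  unfolding Gdens_def norm3 sum_2 sum_3 by (simp add: power2_eq_square algebra_simps)

lemma sum_nonneg_tendsto0:
  fixes a b :: "nat \<Rightarrow> real"
  assumes "\<And>n. 0 \<le> a n" "\<And>n. 0 \<le> b n" "(\<lambda>n. a n + b n) \<longlonglongrightarrow> 0"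
  shows "a \<longlonglongrightarrow> 0" "b \<longlonglongrightarrow> 0"
proof -
  show "a \<longlonglongrightarrow> 0"
    by (rule Lim_null_comparison[OF _ assms(3)]) (use assms(1,2) in auto)
  show "b \<longlonglongrightarrow> 0"
    by (rule Lim_null_comparison[OF _ assms(3)]) (use assms(1,2) in auto)
qed


theorem lemma3p5:
  fixes \<Omega> :: "(real^2) set"
  assumes "C11_domain \<Omega>"
  shows "\<exists>c>0. \<forall>(u :: real^2 \<Rightarrow> real^3) (D :: real^2 \<Rightarrow> real^3^2).
           (\<forall>k. H10 \<Omega> (\<lambda>x. u x $ k)) \<and>
           (\<forall>i k. weak_pd \<Omega> i (\<lambda>x. u x $ k) (\<lambda>x. D x $ i $ k)) \<longrightarrow>
           integral\<^sup>L (lebesgue_on \<Omega>) (\<lambda>x. Gdens (u x) (D x))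
             \<ge> c * integral\<^sup>L (lebesgue_on \<Omega>) (\<lambda>x. (norm (u x))\<^sup>2)"
proof -
  have \<Omega>: "open \<Omega>" using assms by (simp add: C11_domain_def)
  show ?thesis
  proof (rule exI[of _ 1], intro conjI allI impI)
    show "(0::real) < 1" by simp
    fix u :: "pt \<Rightarrow> real^3" and D :: "pt \<Rightarrow> real^3^2"
    assume H: "(\<forall>k. H10 \<Omega> (\<lambda>x. u x $ k)) \<and> (\<forall>i k. weak_pd \<Omega> i (\<lambda>x. u x $ k) (\<lambda>x. D x $ i $ k))"
    then have Hu: "\<And>k. H10 \<Omega> (\<lambda>x. u x $ k)" and Hd: "\<And>i k. weak_pd \<Omega> i (\<lambda>x. u x $ k) (\<lambda>x. D x $ i $ k)"
      by auto
    let ?\<mu> = "lebesgue_on \<Omega>"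
    let ?Q = "\<lambda>k (gp :: (2 \<Rightarrow> pt \<Rightarrow> real) \<times> (nat \<Rightarrow> pt \<Rightarrow> real)).
       (\<forall>i. weak_pd \<Omega> i (\<lambda>x. u x $ k) (fst gp i) \<and> L2 \<Omega> (fst gp i)) \<and> (\<forall>n. test_fun \<Omega> (snd gp n)) \<and>
       (\<lambda>n. integral\<^sup>L ?\<mu> (\<lambda>x. (snd gp n x - u x $ k)\<^sup>2)
              + (\<Sum>i\<in>UNIV. integral\<^sup>L ?\<mu> (\<lambda>x. (pd i (snd gp n) x - fst gp i x)\<^sup>2))) \<longlonglongrightarrow> 0"
    have "\<forall>k. \<exists>gp. ?Q k gp"
    proof
      fix k
      from Hu[of k, unfolded H10_def] obtain g \<phi> where
        "(\<forall>i. weak_pd \<Omega> i (\<lambda>x. u x $ k) (g i) \<and> L2 \<Omega> (g i))" "(\<forall>n. test_fun \<Omega> (\<phi> n))"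
        "(\<lambda>n. integral\<^sup>L ?\<mu> (\<lambda>x. (\<phi> n x - u x $ k)\<^sup>2)
              + (\<Sum>i\<in>UNIV. integral\<^sup>L ?\<mu> (\<lambda>x. (pd i (\<phi> n) x - g i x)\<^sup>2))) \<longlonglongrightarrow> 0"
        by blast
      then show "\<exists>gp. ?Q k gp" by (intro exI[of _ "(g, \<phi>)"]) simp
    qed
    then obtain GP where GP: "\<forall>k. ?Q k (GP k)" using choice[of ?Q] by blast
    define gg where "gg k = fst (GP k)" for k
    define ph where "ph k = snd (GP k)" for k
    have wg: "\<And>i k. weak_pd \<Omega> i (\<lambda>x. u x $ k) (gg k i)" and Lg: "\<And>i k. L2M ?\<mu> (gg k i)"
      and tph: "\<And>k n. test_fun \<Omega> (ph k n)"
      and conv: "\<And>k. (\<lambda>n. integral\<^sup>L ?\<mu> (\<lambda>x. (ph k n x - u x $ k)\<^sup>2)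
              + (\<Sum>i\<in>UNIV. integral\<^sup>L ?\<mu> (\<lambda>x. (pd i (ph k n) x - gg k i x)\<^sup>2))) \<longlonglongrightarrow> 0"
      using GP by (auto simp: gg_def ph_def L2_L2M)
    have Lu: "\<And>k. L2M ?\<mu> (\<lambda>x. u x $ k)" using Hu by (simp add: H10_def L2_L2M)
    have ae: "AE x in ?\<mu>. \<forall>i k. D x $ i $ k = gg k i x"
      unfolding AE_all_countable using weak_ae[OF \<Omega> Hd wg] by blast
    define Mg where "Mg x = (\<chi> i k. gg k i x)" for x
    define Su where "Su x = (u x $ 1)\<^sup>2 + (u x $ 2)\<^sup>2 + (u x $ 3)\<^sup>2" for x
    define N where "N x = (gg 1 1 x + gg 2 2 x)\<^sup>2 + (gg 3 2 x + u x $ 1)\<^sup>2 + (u x $ 2 - gg 3 1 x)\<^sup>2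
        + (gg 2 1 x - gg 1 2 x + u x $ 3)\<^sup>2" for x
    define P where "P x = gg 2 1 x * gg 1 2 x - gg 1 1 x * gg 2 2 x" for x
    have Fg: "Gdens (u x) (Mg x) = Su x + N x + 2 * P x" for x
      unfolding Gdens_id Su_def N_def P_def Mg_def by simp
    have sq: "\<And>f. L2M ?\<mu> f \<Longrightarrow> integrable ?\<mu> (\<lambda>x. (f x)\<^sup>2)" by (simp add: L2M_def)
    have iSu: "integrable ?\<mu> Su" unfolding Su_def using sq[OF Lu] by simp
    have iN: "integrable ?\<mu> N"
    proof -
      have "integrable ?\<mu> (\<lambda>x. (1 * gg 1 1 x + 1 * gg 2 2 x)\<^sup>2)" by (rule sq[OF L2M_lin[OF Lg Lg]])
      moreover have "integrable ?\<mu> (\<lambda>x. (1 * gg 3 2 x + 1 * u x $ 1)\<^sup>2)" by (rule sq[OF L2M_lin[OF Lg Lu]])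
      moreover have "integrable ?\<mu> (\<lambda>x. (1 * u x $ 2 + (-1) * gg 3 1 x)\<^sup>2)" by (rule sq[OF L2M_lin[OF Lu Lg]])
      moreover have "integrable ?\<mu> (\<lambda>x. (1 * (1 * gg 2 1 x + (-1) * gg 1 2 x) + 1 * u x $ 3)\<^sup>2)"
        by (rule sq[OF L2M_lin[OF L2M_lin[OF Lg Lg] Lu]])
      ultimately show ?thesis unfolding N_def by simp
    qed
    have iP: "integrable ?\<mu> P" unfolding P_def using L2M_prod[OF Lg Lg] by simp
    have B0: "(\<lambda>n. integral\<^sup>L ?\<mu> (\<lambda>x. (pd i (ph k n) x - gg k i x)\<^sup>2)) \<longlonglongrightarrow> 0" for i k
    proof -
      have c: "(\<lambda>n. integral\<^sup>L ?\<mu> (\<lambda>x. (ph k n x - u x $ k)\<^sup>2)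
          + (integral\<^sup>L ?\<mu> (\<lambda>x. (pd 1 (ph k n) x - gg k 1 x)\<^sup>2) + integral\<^sup>L ?\<mu> (\<lambda>x. (pd 2 (ph k n) x - gg k 2 x)\<^sup>2))) \<longlonglongrightarrow> 0"
        using conv[of k] by (simp add: sum_2)
      have c2: "(\<lambda>n. integral\<^sup>L ?\<mu> (\<lambda>x. (pd 1 (ph k n) x - gg k 1 x)\<^sup>2) + integral\<^sup>L ?\<mu> (\<lambda>x. (pd 2 (ph k n) x - gg k 2 x)\<^sup>2)) \<longlonglongrightarrow> 0"
        by (rule sum_nonneg_tendsto0(2)[OF _ _ c]) (auto intro: add_nonneg_nonneg)
      show ?thesis
        using sum_nonneg_tendsto0[OF _ _ c2] exhaust_2[of i] by auto
    qed
    have Lpd: "\<And>i k n. L2M ?\<mu> (pd i (ph k n))" using test_fun_pd_L2[OF \<Omega> tph] by (simp add: L2_L2M)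
    have l1: "(\<lambda>n. integral\<^sup>L ?\<mu> (\<lambda>x. pd 1 (ph 2 n) x * pd 2 (ph 1 n) x)) \<longlonglongrightarrow> integral\<^sup>L ?\<mu> (\<lambda>x. gg 2 1 x * gg 1 2 x)"
      by (rule prod_lim[OF Lpd Lg Lpd Lg B0 B0])
    have l2: "(\<lambda>n. integral\<^sup>L ?\<mu> (\<lambda>x. pd 2 (ph 2 n) x * pd 1 (ph 1 n) x)) \<longlonglongrightarrow> integral\<^sup>L ?\<mu> (\<lambda>x. gg 2 2 x * gg 1 1 x)"
      by (rule prod_lim[OF Lpd Lg Lpd Lg B0 B0])
    have eqS: "(\<lambda>n. integral\<^sup>L ?\<mu> (\<lambda>x. pd 1 (ph 2 n) x * pd 2 (ph 1 n) x)) = (\<lambda>n. integral\<^sup>L ?\<mu> (\<lambda>x. pd 2 (ph 2 n) x * pd 1 (ph 1 n) x))"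
      by (rule ext) (rule ibp_Omega[OF \<Omega> tph tph])
    from l1 have "(\<lambda>n. integral\<^sup>L ?\<mu> (\<lambda>x. pd 2 (ph 2 n) x * pd 1 (ph 1 n) x)) \<longlonglongrightarrow> integral\<^sup>L ?\<mu> (\<lambda>x. gg 2 1 x * gg 1 2 x)"
      by (simp only: eqS)
    from LIMSEQ_unique[OF this l2] have eqI: "integral\<^sup>L ?\<mu> (\<lambda>x. gg 2 1 x * gg 1 2 x) = integral\<^sup>L ?\<mu> (\<lambda>x. gg 2 2 x * gg 1 1 x)" .
    have P0: "integral\<^sup>L ?\<mu> P = 0"
    proof -
      have "integral\<^sup>L ?\<mu> P = integral\<^sup>L ?\<mu> (\<lambda>x. gg 2 1 x * gg 1 2 x) - integral\<^sup>L ?\<mu> (\<lambda>x. gg 1 1 x * gg 2 2 x)"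
        unfolding P_def using L2M_prod[OF Lg Lg] by (simp add: Bochner_Integration.integral_diff)
      also have "integral\<^sup>L ?\<mu> (\<lambda>x. gg 1 1 x * gg 2 2 x) = integral\<^sup>L ?\<mu> (\<lambda>x. gg 2 2 x * gg 1 1 x)"
        by (simp add: mult.commute)
      finally show ?thesis using eqI by simp
    qed
    have mFg: "(\<lambda>x. Gdens (u x) (Mg x)) \<in> borel_measurable ?\<mu>"
    proof -
      have "(\<lambda>x. Su x + N x + 2 * P x) \<in> borel_measurable ?\<mu>"
        using iSu iN iP by (auto intro!: borel_measurable_add borel_measurable_times)
      then show ?thesis by (simp add: Fg)
    qed
    have aeF: "AE x in ?\<mu>. Gdens (u x) (Mg x) = Gdens (u x) (D x)"
      using ae
    proof eventually_elim
      case (elim x)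
      have "D x = Mg x" unfolding Mg_def vec_eq_iff using elim by simp
      then show ?case by simp
    qed
    have "integral\<^sup>L ?\<mu> (\<lambda>x. Gdens (u x) (D x)) = integral\<^sup>L ?\<mu> (\<lambda>x. Gdens (u x) (Mg x))"
      by (rule integral_cong_AE[OF meas_AE_on[OF \<Omega> mFg aeF] mFg]) (use aeF in auto)
    also have "\<dots> = integral\<^sup>L ?\<mu> Su + integral\<^sup>L ?\<mu> N + 2 * integral\<^sup>L ?\<mu> P"
      unfolding Fg using iSu iN iP by simp
    also have "\<dots> = integral\<^sup>L ?\<mu> Su + integral\<^sup>L ?\<mu> N" using P0 by simp
    also have "\<dots> \<ge> integral\<^sup>L ?\<mu> Su"
      by (simp add: N_def)
    finally have "integral\<^sup>L ?\<mu> Su \<le> integral\<^sup>L ?\<mu> (\<lambda>x. Gdens (u x) (D x))" .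
    moreover have "integral\<^sup>L ?\<mu> Su = integral\<^sup>L ?\<mu> (\<lambda>x. (norm (u x))\<^sup>2)"
      unfolding Su_def norm3 ..
    ultimately show "1 * integral\<^sup>L ?\<mu> (\<lambda>x. (norm (u x))\<^sup>2) \<le> integral\<^sup>L ?\<mu> (\<lambda>x. Gdens (u x) (D x))"
      by simp
  qed
qed


end
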